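(* Let $p \in [1,\infty)$ and let $q \in (1,\infty]$ be its conjugate exponent, $1/p + 1/q = 1$ (with $q=\infty$ when $p=1$). Let $\alpha_s, \alpha_f > 0$ and let $g$ be a real scalar image. Define $$\mathcal{GHS}_p(g,\alpha_s,\alpha_f) = \max\Big\{ \langle \mathbf N, \mathbf H * g\rangle \;:\; \mathbf N \text{ a symmetric } 2\times 2 \text{ matrix image},\ \|\mathbf N\|_{\infty,S(q)} \le \alpha_s,\ \|\mathbf N * \tilde{\mathbf d}\|_{\infty,2} \le \alpha_f \Big\}.$$ Then $$\mathcal{GHS}_p(g,\alpha_s,\alpha_f) = \min_{\mathbf u}\; \alpha_f \|\mathbf d * g - \mathbf u\|_{1,2} + \alpha_s \big\| 0.5(\mathbf u * \mathbf d^t + \mathbf d * \mathbf u^t)\big\|_{1,S(p)},$$ where the minimum is over all real $2\times 1$ vector images $\mathbf u$.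
   Context: All images are real-valued arrays on a finite 2D pixel grid (indexed by $\mathbf r$), with convolution $(x*y)(\mathbf r') = \sum_{\mathbf r} x(\mathbf r) y(\mathbf r'-\mathbf r)$ taken periodically (circularly) on the grid. A vector (resp. matrix) image assigns a vector (resp. matrix) to each pixel. Convolution of vector/matrix images follows the rules of matrix multiplication: if $\mathbf X$ is an image of $m\times l$ matrices and $\mathbf Y$ of $l\times n$ matrices, $(\mathbf X*\mathbf Y)_{i,j} = \sum_{k=1}^l x_{i,k}*y_{k,j}$; convolving a matrix image with a scalar image is done entrywise; transposition is pixelwise. For a filter $h$, $\tilde h(\mathbf r) = h(-\mathbf r)$, and for a vector filter, flipping is applied componentwise. $d_x, d_y$ are discrete filters implementing $\partial/\partial x$, $\partial/\partial y$, $\mathbf d = [d_x\; d_y]^t$, and the discrete Hessian filter is $\mathbf H = \begin{bmatrix} d_{xx} & d_{xy}\\ d_{xy} & d_{yy}\end{bmatrix}$ with $d_{xx} = d_x*d_x$, $d_{yy}=d_y*d_y$, $d_{xy} = d_x*d_y$ (so $\mathbf H * g = g*\mathbf d*\mathbf d^t$). Thus $\mathbf d*\mathbf u^t$ is the $2\times2$ matrix image with $(i,j)$ entry $d_i * u_j$, and $\mathbf u * \mathbf d^t$ has $(i,j)$ entry $u_i*d_j$; $\mathbf N*\tilde{\mathbf d}$ is the $2\times 1$ vector image with $i$-th entry $\sum_j n_{i,j}*\tilde d_j$. For matrix images, $\langle \mathbf N,\mathbf M\rangle = \sum_{\mathbf r} \mathrm{Tr}(\mathbf N(\mathbf r)^t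 \mathbf M(\mathbf r))$. For a matrix $\mathbf M$, $\|\mathbf M\|_{S(p)}$ is the Schatten $p$-norm (the $\ell_p$ norm of its singular values). Mixed norms: $\|\mathbf v\|_{1,2} = \sum_{\mathbf r}\|\mathbf v(\mathbf r)\|_2$, $\|\mathbf v\|_{\infty,2} = \max_{\mathbf r}\|\mathbf v(\mathbf r)\|_2$, $\|\mathbf M\|_{1,S(p)} = \sum_{\mathbf r}\|\mathbf M(\mathbf r)\|_{S(p)}$, $\|\mathbf M\|_{\infty,S(q)} = \max_{\mathbf r}\|\mathbf M(\mathbf r)\|_{S(q)}$. *)

theory Defs
  imports "HOL-Analysis.Analysis"
begin

text \<open>Images on the periodic M x N pixel grid, pixels indexed by pairs (i,j) with
  i < M, j < N.  Values outside the grid are irrelevant (never used).\<close>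

type_synonym img = "nat \<times> nat \<Rightarrow> real"
type_synonym vimg = "nat \<times> nat \<Rightarrow> real^2"
type_synonym mimg = "nat \<times> nat \<Rightarrow> real^2^2"

definition grid :: "nat \<Rightarrow> nat \<Rightarrow> (nat \<times> nat) set" where
  "grid M N = {0..<M} \<times> {0..<N}"

definition conv :: "nat \<Rightarrow> nat \<Rightarrow> img \<Rightarrow> img \<Rightarrow> img" where
  "conv M N x y r' = (\<Sum>r\<in>grid M N. x r *
      y ((fst r' + M - fst r) mod M, (snd r' + N - snd r) mod N))"

text \<open>Flip: h~(r) = h(-r) (periodically).\<close>
definition flip :: "nat \<Rightarrow> nat \<Rightarrow> img \<Rightarrow> img" where
  "flip M N h r = h ((M - fst r mod M) mod M, (N - snd r mod N) mod N)"

text \<open>The vector filter d = [d_x d_y]^t is given as d :: 2 => img (d 1 = d_x, d 2 = d_y).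
  H * g: entry (i,j) is (d_i * d_j) * g.\<close>
definition hess_conv :: "nat \<Rightarrow> nat \<Rightarrow> (2 \<Rightarrow> img) \<Rightarrow> img \<Rightarrow> mimg" where
  "hess_conv M N d g r = (\<chi> i j. conv M N (conv M N (d i) (d j)) g r)"

definition grad_conv :: "nat \<Rightarrow> nat \<Rightarrow> (2 \<Rightarrow> img) \<Rightarrow> img \<Rightarrow> vimg" where
  "grad_conv M N d g r = (\<chi> i. conv M N (d i) g r)"

definition mat_conv_flip :: "nat \<Rightarrow> nat \<Rightarrow> mimg \<Rightarrow> (2 \<Rightarrow> img) \<Rightarrow> vimg" where
  "mat_conv_flip M N Nm d r = (\<chi> i. \<Sum>j\<in>UNIV. conv M N (\<lambda>s. Nm s $ i $ j) (flip M N (d j)) r)"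

definition sym_grad :: "nat \<Rightarrow> nat \<Rightarrow> (2 \<Rightarrow> img) \<Rightarrow> vimg \<Rightarrow> mimg" where
  "sym_grad M N d u r = (\<chi> i j. 0.5 * (conv M N (\<lambda>s. u s $ i) (d j) r
                                      + conv M N (d i) (\<lambda>s. u s $ j) r))"

definition minner :: "nat \<Rightarrow> nat \<Rightarrow> mimg \<Rightarrow> mimg \<Rightarrow> real" where
  "minner M N A B = (\<Sum>r\<in>grid M N. trace (transpose (A r) ** B r))"

text \<open>Singular values of a real 2x2 matrix A: square roots of the eigenvalues
  (roots of the characteristic polynomial t^2 - tr(B) t + det B) of B = A^t A,
  sv1 \<ge> sv2 \<ge> 0.\<close>
definition sv1 :: "real^2^2 \<Rightarrow> real" where
  "sv1 A = (let B = transpose A ** A in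
     sqrt ((trace B + sqrt ((trace B)\<^sup>2 - 4 * det B)) / 2))"

definition sv2 :: "real^2^2 \<Rightarrow> real" where
  "sv2 A = (let B = transpose A ** A in
     sqrt ((trace B - sqrt ((trace B)\<^sup>2 - 4 * det B)) / 2))"

definition schatten :: "ereal \<Rightarrow> real^2^2 \<Rightarrow> real" where
  "schatten p A = (if p = \<infinity> then max (sv1 A) (sv2 A)
                   else (sv1 A powr real_of_ereal p + sv2 A powr real_of_ereal p)
                          powr (1 / real_of_ereal p))"

definition norm_1_2 :: "nat \<Rightarrow> nat \<Rightarrow> vimg \<Rightarrow> real" where
  "norm_1_2 M N v = (\<Sum>r\<in>grid M N. norm (v r))"

definition norm_inf_2 :: "nat \<Rightarrow> nat \<Rightarrow> vimg \<Rightarrow> real" where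
  "norm_inf_2 M N v = Max ((\<lambda>r. norm (v r)) ` grid M N)"

definition norm_1_S :: "nat \<Rightarrow> nat \<Rightarrow> ereal \<Rightarrow> mimg \<Rightarrow> real" where
  "norm_1_S M N p A = (\<Sum>r\<in>grid M N. schatten p (A r))"

definition norm_inf_S :: "nat \<Rightarrow> nat \<Rightarrow> ereal \<Rightarrow> mimg \<Rightarrow> real" where
  "norm_inf_S M N q A = Max ((\<lambda>r. schatten q (A r)) ` grid M N)"

definition GHS_feasible :: "nat \<Rightarrow> nat \<Rightarrow> (2 \<Rightarrow> img) \<Rightarrow> ereal \<Rightarrow> real \<Rightarrow> real \<Rightarrow> mimg set" where
  "GHS_feasible M N d q as af = {Nm. (\<forall>r\<in>grid M N. transpose (Nm r) = Nm r)
      \<and> norm_inf_S M N q Nm \<le> as \<and> norm_inf_2 M N (mat_conv_flip M N Nm d) \<le> af}"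

text \<open>GHS_p(g, as, af), q the conjugate exponent of p; defined as the supremum,
  the statement asserts it is attained (a maximum).\<close>
definition GHS :: "nat \<Rightarrow> nat \<Rightarrow> (2 \<Rightarrow> img) \<Rightarrow> ereal \<Rightarrow> img \<Rightarrow> real \<Rightarrow> real \<Rightarrow> real" where
  "GHS M N d q g as af = Sup ((\<lambda>Nm. minner M N Nm (hess_conv M N d g)) ` GHS_feasible M N d q as af)"

definition GHS_primal :: "nat \<Rightarrow> nat \<Rightarrow> (2 \<Rightarrow> img) \<Rightarrow> real \<Rightarrow> img \<Rightarrow> real \<Rightarrow> real \<Rightarrow> vimg \<Rightarrow> real" where
  "GHS_primal M N d p g as af u =
     af * norm_1_2 M N (\<lambda>r. grad_conv M N d g r - u r) + as * norm_1_S M N (ereal p) (sym_grad M N d u)"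

end

theory Submission
  imports Defs
begin

definition sub1 :: "nat \<Rightarrow> nat \<Rightarrow> nat \<Rightarrow> nat" where
  "sub1 M a b = (a + M - b) mod M"

lemma sub1_int: assumes "b < M" shows "int (sub1 M a b) = (int a - int b) mod int M"
proof -
  have "int (sub1 M a b) = (int a + int M - int b) mod int M"
    unfolding sub1_def using assms by (simp add: of_nat_mod of_nat_diff)
  also have "\<dots> = ((int a - int b) + int M) mod int M" by (simp add: algebra_simps)
  also have "\<dots> = (int a - int b) mod int M" by (rule mod_add_self2)
  finally show ?thesis .
qed

lemma sub1_lt: "0 < M \<Longrightarrow> sub1 M a b < M" by (simp add: sub1_def)

lemma sub1_inv: assumes "a < M" "b < M" shows "sub1 M a (sub1 M a b) = b"
proof -
  have M: "0 < M" using assms by simp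
  have "int (sub1 M a (sub1 M a b)) = (int a - (int a - int b) mod int M) mod int M"
    using sub1_int[OF sub1_lt[OF M]] sub1_int[OF assms(2)] by simp
  also have "\<dots> = (int a - (int a - int b)) mod int M" by (simp add: mod_diff_right_eq)
  also have "\<dots> = int b" using assms by simp
  finally show ?thesis by simp
qed

lemma sub1_assoc: assumes "r < M" "s < M" "t < M"
  shows "sub1 M (sub1 M r t) (sub1 M s t) = sub1 M r s"
proof -
  have M: "0 < M" using assms by simp
  have "int (sub1 M (sub1 M r t) (sub1 M s t)) = ((int r - int t) mod int M - (int s - int t) mod int M) mod int M"
    using sub1_int[OF sub1_lt[OF M]] sub1_int[OF assms(3)] by simp
  also have "\<dots> = ((int r - int t) - (int s - int t)) mod int M" by (simp add: mod_diff_eq)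
  also have "\<dots> = int (sub1 M r s)" using sub1_int[OF assms(2)] by simp
  finally show ?thesis by simp
qed

lemma sub1_flip: assumes "r < M" "s < M" shows "(M - sub1 M s r mod M) mod M = sub1 M r s"
proof -
  have M: "0 < M" using assms by simp
  have c: "sub1 M s r < M" using M by (rule sub1_lt)
  have "int ((M - sub1 M s r mod M) mod M) = (int M - (int s - int r) mod int M) mod int M"
    using c sub1_int[OF assms(1)] by (simp add: of_nat_mod of_nat_diff)
  also have "\<dots> = (- ((int s - int r) mod int M)) mod int M" by simp
  also have "\<dots> = (- (int s - int r)) mod int M" by (rule mod_minus_eq)
  also have "\<dots> = (int r - int s) mod int M" by (simp add: algebra_simps)
  also have "\<dots> = int (sub1 M r s)" using sub1_int[OF assms(2)] by simp
  finally show ?thesis by simp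
qed

lemma sub1_addinv1: assumes "u < M" "t < M" shows "sub1 M ((u + t) mod M) t = u"
proof -
  have "int (sub1 M ((u + t) mod M) t) = ((int u + int t) mod int M - int t) mod int M"
    using sub1_int[OF assms(2)] by (simp add: of_nat_mod)
  also have "\<dots> = (int u + int t - int t) mod int M" by (simp add: mod_diff_left_eq)
  also have "\<dots> = int u" using assms by simp
  finally show ?thesis by simp
qed

lemma sub1_addinv2: assumes "s < M" "t < M" shows "(sub1 M s t + t) mod M = s"
proof -
  have "int ((sub1 M s t + t) mod M) = ((int s - int t) mod int M + int t) mod int M"
    using sub1_int[OF assms(2)] by (simp add: of_nat_mod)
  also have "\<dots> = (int s - int t + int t) mod int M" by (simp add: mod_add_left_eq)
  also have "\<dots> = int s" using assms by simp
  finally show ?thesis by simp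
qed

definition msub :: "nat \<Rightarrow> nat \<Rightarrow> nat \<times> nat \<Rightarrow> nat \<times> nat \<Rightarrow> nat \<times> nat" where
  "msub M N r s = (sub1 M (fst r) (fst s), sub1 N (snd r) (snd s))"

definition madd :: "nat \<Rightarrow> nat \<Rightarrow> nat \<times> nat \<Rightarrow> nat \<times> nat \<Rightarrow> nat \<times> nat" where
  "madd M N r s = ((fst r + fst s) mod M, (snd r + snd s) mod N)"

lemma conv_msub: "conv M N x y r = (\<Sum>s\<in>grid M N. x s * y (msub M N r s))"
  by (simp add: conv_def msub_def sub1_def)

lemma in_grid: "r \<in> grid M N \<longleftrightarrow> fst r < M \<and> snd r < N"
  by (cases r) (auto simp: grid_def)

lemma finite_grid[simp]: "finite (grid M N)" by (simp add: grid_def)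

lemma msub_in: "0 < M \<Longrightarrow> 0 < N \<Longrightarrow> msub M N r s \<in> grid M N"
  by (simp add: in_grid msub_def sub1_lt)

lemma msub_inv: "r \<in> grid M N \<Longrightarrow> s \<in> grid M N \<Longrightarrow> msub M N r (msub M N r s) = s"
  by (simp add: in_grid msub_def sub1_inv prod_eq_iff)

lemma msub_assoc: "r \<in> grid M N \<Longrightarrow> s \<in> grid M N \<Longrightarrow> t \<in> grid M N \<Longrightarrow>
   msub M N (msub M N r t) (msub M N s t) = msub M N r s"
  by (simp add: in_grid msub_def sub1_assoc)

lemma flip_msub: "r \<in> grid M N \<Longrightarrow> s \<in> grid M N \<Longrightarrow> flip M N y (msub M N s r) = y (msub M N r s)"
  by (simp add: in_grid msub_def flip_def sub1_flip)

lemma conv_comm: assumes "r \<in> grid M N" shows "conv M N x y r = conv M N y x r"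
proof -
  have M: "0 < M" "0 < N" using assms by (auto simp: in_grid)
  show ?thesis unfolding conv_msub
    by (rule sum.reindex_bij_witness[where i="msub M N r" and j="msub M N r"])
       (auto simp: msub_inv[OF assms] msub_in[OF M] mult.commute)
qed

lemma conv_cong: assumes "\<And>s. s \<in> grid M N \<Longrightarrow> x s = x' s" "\<And>s. s \<in> grid M N \<Longrightarrow> y s = y' s"
  shows "conv M N x y r = conv M N x' y' r"
proof (cases "0 < M \<and> 0 < N")
  case True
  then show ?thesis unfolding conv_msub using assms msub_in[of M N] by (intro sum.cong) auto
next
  case False
  then have "grid M N = {}" by (auto simp: grid_def)
  then show ?thesis by (simp add: conv_def)
qed

lemma conv_adj: "(\<Sum>r\<in>grid M N. z r * conv M N x y r) = (\<Sum>s\<in>grid M N. x s * conv M N z (flip M N y) s)"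
proof -
  have "(\<Sum>r\<in>grid M N. z r * conv M N x y r) = (\<Sum>r\<in>grid M N. \<Sum>s\<in>grid M N. z r * x s * y (msub M N r s))"
    unfolding conv_msub by (simp add: sum_distrib_left mult.assoc)
  also have "\<dots> = (\<Sum>s\<in>grid M N. \<Sum>r\<in>grid M N. z r * x s * y (msub M N r s))" by (rule sum.swap)
  also have "\<dots> = (\<Sum>s\<in>grid M N. x s * conv M N z (flip M N y) s)"
    unfolding conv_msub sum_distrib_left
    by (intro sum.cong refl) (simp add: flip_msub mult.commute mult.left_commute)
  finally show ?thesis .
qed

lemma madd_in: "0 < M \<Longrightarrow> 0 < N \<Longrightarrow> madd M N r s \<in> grid M N"
  by (simp add: in_grid madd_def)

lemma conv_assoc: assumes "r \<in> grid M N" shows "conv M N (conv M N x y) z r = conv M N x (conv M N y z) r"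
proof -
  have M: "0 < M" "0 < N" using assms by (auto simp: in_grid)
  have "conv M N (conv M N x y) z r = (\<Sum>s\<in>grid M N. \<Sum>t\<in>grid M N. x t * (y (msub M N s t) * z (msub M N r s)))"
    unfolding conv_msub sum_distrib_right by (simp add: mult.assoc)
  also have "\<dots> = (\<Sum>t\<in>grid M N. \<Sum>s\<in>grid M N. x t * (y (msub M N s t) * z (msub M N r s)))" by (rule sum.swap)
  also have "\<dots> = (\<Sum>t\<in>grid M N. x t * (\<Sum>u\<in>grid M N. y u * z (msub M N (msub M N r t) u)))"
  proof (intro sum.cong refl)
    fix t assume t: "t \<in> grid M N"
    have "(\<Sum>s\<in>grid M N. y (msub M N s t) * z (msub M N r s)) = (\<Sum>u\<in>grid M N. y u * z (msub M N (msub M N r t) u))"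
      by (rule sum.reindex_bij_witness[where i="\<lambda>u. madd M N u t" and j="\<lambda>s. msub M N s t"])
         (use t assms M in \<open>auto simp: msub_in madd_in msub_assoc\<close>,
          auto simp: in_grid madd_def msub_def sub1_addinv1 sub1_addinv2 prod_eq_iff)
    then show "(\<Sum>s\<in>grid M N. x t * (y (msub M N s t) * z (msub M N r s))) = x t * (\<Sum>u\<in>grid M N. y u * z (msub M N (msub M N r t) u))"
      by (simp add: sum_distrib_left[symmetric])
  qed
  also have "\<dots> = conv M N x (conv M N y z) r" unfolding conv_msub by simp
  finally show ?thesis .
qed

definition vin :: "nat \<Rightarrow> nat \<Rightarrow> vimg \<Rightarrow> vimg \<Rightarrow> real" where
  "vin M N v w = (\<Sum>r\<in>grid M N. inner (v r) (w r))"

lemma trace_tm: "trace (transpose A ** B) = (\<Sum>i\<in>UNIV. \<Sum>j\<in>UNIV. A$i$j * (B::real^'n^'n)$i$j)"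
proof -
  have "trace (transpose A ** B) = (\<Sum>i\<in>UNIV. \<Sum>k\<in>UNIV. A$k$i * B$k$i)"
    by (simp add: trace_def matrix_matrix_mult_def transpose_def)
  also have "\<dots> = (\<Sum>k\<in>UNIV. \<Sum>i\<in>UNIV. A$k$i * B$k$i)" by (rule sum.swap)
  finally show ?thesis .
qed

lemma minner_expand: "minner M N A B = (\<Sum>i\<in>UNIV. \<Sum>j\<in>UNIV. \<Sum>r\<in>grid M N. A r $i$j * B r $i$j)"
  unfolding minner_def trace_tm
  by (subst sum.swap, subst (2) sum.swap) (rule refl)

lemma vin_expand: "vin M N v w = (\<Sum>i\<in>UNIV. \<Sum>r\<in>grid M N. v r $ i * w r $ i)"
  unfolding vin_def inner_vec_def by (subst sum.swap) simp

lemma hess_swap: assumes "r \<in> grid M N"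
  shows "conv M N (conv M N a b) g r = conv M N (conv M N a g) b r"
proof -
  have "conv M N (conv M N a b) g r = conv M N a (conv M N b g) r" by (rule conv_assoc[OF assms])
  also have "\<dots> = conv M N a (conv M N g b) r" by (rule conv_cong) (auto intro: conv_comm)
  also have "\<dots> = conv M N (conv M N a g) b r" by (rule conv_assoc[OF assms, symmetric])
  finally show ?thesis .
qed

lemma minner_hess: "minner M N Nm (hess_conv M N d g) = vin M N (mat_conv_flip M N Nm d) (grad_conv M N d g)"
proof -
  have "minner M N Nm (hess_conv M N d g) = (\<Sum>i\<in>UNIV. \<Sum>j\<in>UNIV. \<Sum>r\<in>grid M N. Nm r $i$j * conv M N (conv M N (d i) g) (d j) r)"
    unfolding minner_expand hess_conv_def by (simp add: hess_swap cong: sum.cong)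
  also have "\<dots> = (\<Sum>i\<in>UNIV. \<Sum>j\<in>UNIV. \<Sum>s\<in>grid M N. conv M N (d i) g s * conv M N (\<lambda>s. Nm s $i$j) (flip M N (d j)) s)"
    by (subst conv_adj) (rule refl)
  also have "\<dots> = (\<Sum>i\<in>UNIV. \<Sum>s\<in>grid M N. \<Sum>j\<in>UNIV. conv M N (\<lambda>s. Nm s $i$j) (flip M N (d j)) s * conv M N (d i) g s)"
    by (intro sum.cong refl) (subst sum.swap, simp add: mult.commute)
  also have "\<dots> = vin M N (mat_conv_flip M N Nm d) (grad_conv M N d g)"
    unfolding vin_expand mat_conv_flip_def grad_conv_def
    by (simp add: sum_distrib_right)
  finally show ?thesis .
qed

lemma sym_grad_sym: assumes "r \<in> grid M N" shows "transpose (sym_grad M N d u r) = sym_grad M N d u r"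
  unfolding sym_grad_def transpose_def vec_eq_iff
proof (intro allI)
  fix i j :: 2
  show "(\<chi> i j. (\<chi> i j. 0.5 * (conv M N (\<lambda>s. u s $ i) (d j) r + conv M N (d i) (\<lambda>s. u s $ j) r)) $ j $ i) $ i $ j =
         (\<chi> i j. 0.5 * (conv M N (\<lambda>s. u s $ i) (d j) r + conv M N (d i) (\<lambda>s. u s $ j) r)) $ i $ j"
    using conv_comm[OF assms, of "\<lambda>s. u s $ j" "d i"] conv_comm[OF assms, of "d j" "\<lambda>s. u s $ i"] by simp
qed

lemma minner_sym_grad: assumes sym: "\<And>r. r \<in> grid M N \<Longrightarrow> transpose (Nm r) = Nm r"
  shows "minner M N Nm (sym_grad M N d u) = vin M N (mat_conv_flip M N Nm d) u"
proof -
  have symE: "Nm r $ j $ i = Nm r $ i $ j" if "r \<in> grid M N" for r i j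
    proof -
    have "transpose (Nm r) $ i $ j = Nm r $ i $ j" using sym[OF that] by simp
    then show ?thesis unfolding transpose_def by simp
  qed
  have A: "(\<Sum>i\<in>UNIV. \<Sum>j\<in>UNIV. \<Sum>r\<in>grid M N. Nm r $i$j * conv M N (d i) (\<lambda>s. u s $ j) r)
     = (\<Sum>i\<in>UNIV. \<Sum>j\<in>UNIV. \<Sum>r\<in>grid M N. Nm r $i$j * conv M N (\<lambda>s. u s $ i) (d j) r)"
  proof -
    have "(\<Sum>i\<in>UNIV. \<Sum>j\<in>UNIV. \<Sum>r\<in>grid M N. Nm r $i$j * conv M N (d i) (\<lambda>s. u s $ j) r)
       = (\<Sum>j\<in>UNIV. \<Sum>i\<in>UNIV. \<Sum>r\<in>grid M N. Nm r $i$j * conv M N (d i) (\<lambda>s. u s $ j) r)"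
      by (rule sum.swap)
    also have "\<dots> = (\<Sum>j\<in>UNIV. \<Sum>i\<in>UNIV. \<Sum>r\<in>grid M N. Nm r $j$i * conv M N (\<lambda>s. u s $ j) (d i) r)"
    proof (intro sum.cong refl)
      fix i j r assume r: "r \<in> grid M N"
      show "Nm r $i$j * conv M N (d i) (\<lambda>s. u s $ j) r = Nm r $j$i * conv M N (\<lambda>s. u s $ j) (d i) r"
        using symE[OF r, of i j] conv_comm[OF r, of "d i" "\<lambda>s. u s $ j"] by simp
    qed
    finally show ?thesis .
  qed
  have "minner M N Nm (sym_grad M N d u)
     = (\<Sum>i\<in>UNIV. \<Sum>j\<in>UNIV. \<Sum>r\<in>grid M N. 0.5 * (Nm r $i$j * conv M N (\<lambda>s. u s $ i) (d j) r)
          + 0.5 * (Nm r $i$j * conv M N (d i) (\<lambda>s. u s $ j) r))"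
    unfolding minner_expand sym_grad_def by (intro sum.cong refl) (simp add: distrib_left)
  also have "\<dots> = 0.5 * (\<Sum>i\<in>UNIV. \<Sum>j\<in>UNIV. \<Sum>r\<in>grid M N. Nm r $i$j * conv M N (\<lambda>s. u s $ i) (d j) r)
     + 0.5 * (\<Sum>i\<in>UNIV. \<Sum>j\<in>UNIV. \<Sum>r\<in>grid M N. Nm r $i$j * conv M N (d i) (\<lambda>s. u s $ j) r)"
    by (simp add: sum.distrib sum_distrib_left)
  also have "\<dots> = (\<Sum>i\<in>UNIV. \<Sum>j\<in>UNIV. \<Sum>r\<in>grid M N. Nm r $i$j * conv M N (\<lambda>s. u s $ i) (d j) r)"
    unfolding A by simp
  also have "\<dots> = (\<Sum>i\<in>UNIV. \<Sum>j\<in>UNIV. \<Sum>s\<in>grid M N. u s $ i * conv M N (\<lambda>s. Nm s $i$j) (flip M N (d j)) s)"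
    by (subst conv_adj) (rule refl)
  also have "\<dots> = (\<Sum>i\<in>UNIV. \<Sum>s\<in>grid M N. \<Sum>j\<in>UNIV. conv M N (\<lambda>s. Nm s $i$j) (flip M N (d j)) s * u s $ i)"
    by (intro sum.cong refl) (subst sum.swap, simp add: mult.commute)
  also have "\<dots> = vin M N (mat_conv_flip M N Nm d) u"
    unfolding vin_expand mat_conv_flip_def
    by (simp add: sum_distrib_right)
  finally show ?thesis .
qed

definition lpn :: "ereal \<Rightarrow> real \<Rightarrow> real \<Rightarrow> real" where
  "lpn P x y = (if P = \<infinity> then max \<bar>x\<bar> \<bar>y\<bar>
     else (\<bar>x\<bar> powr real_of_ereal P + \<bar>y\<bar> powr real_of_ereal P) powr (1 / real_of_ereal P))"

definition conjp :: "ereal \<Rightarrow> ereal \<Rightarrow> bool" where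
  "conjp P Q \<longleftrightarrow> (P = \<infinity> \<and> Q = 1) \<or> (P = 1 \<and> Q = \<infinity>) \<or>
     (\<exists>p q. P = ereal p \<and> Q = ereal q \<and> 1 < p \<and> 1 < q \<and> 1/p + 1/q = 1)"

lemma conjp_sym: "conjp P Q \<Longrightarrow> conjp Q P"
  unfolding conjp_def by (auto simp: add.commute)

lemma lpn_nonneg: "0 \<le> lpn P x y" by (auto simp add: lpn_def le_max_iff_disj)

lemma lpn_one: "lpn 1 x y = \<bar>x\<bar> + \<bar>y\<bar>"
  by (simp add: lpn_def one_ereal_def)

lemma lpn_inf: "lpn \<infinity> x y = max \<bar>x\<bar> \<bar>y\<bar>"
  by (simp add: lpn_def)

lemma lpn_fin: "lpn (ereal p) x y = (\<bar>x\<bar> powr p + \<bar>y\<bar> powr p) powr (1 / p)"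
  by (simp add: lpn_def)


lemma young_sum:
  fixes p q :: real
  assumes pq: "1 < p" "1 < q" "1/p + 1/q = 1"
  shows "a1 * b1 + a2 * b2 \<le> (\<bar>a1\<bar> powr q + \<bar>a2\<bar> powr q) powr (1/q) * (\<bar>b1\<bar> powr p + \<bar>b2\<bar> powr p) powr (1/p)"
proof -
  define SA where "SA = \<bar>a1\<bar> powr q + \<bar>a2\<bar> powr q"
  define SB where "SB = \<bar>b1\<bar> powr p + \<bar>b2\<bar> powr p"
  define A where "A = SA powr (1/q)"
  define B where "B = SB powr (1/p)"
  have le: "a1 * b1 + a2 * b2 \<le> \<bar>a1\<bar> * \<bar>b1\<bar> + \<bar>a2\<bar> * \<bar>b2\<bar>"
    by (metis abs_ge_self abs_mult add_mono)
  show ?thesis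
  proof (cases "SA = 0 \<or> SB = 0")
    case True
    then have "(a1 = 0 \<and> a2 = 0) \<or> (b1 = 0 \<and> b2 = 0)"
      unfolding SA_def SB_def by (smt (verit) powr_eq_0_iff powr_ge_zero abs_eq_0)
    then show ?thesis by (auto simp: SA_def SB_def)
  next
    case False
    then have SA: "0 < SA" and SB: "0 < SB" unfolding SA_def SB_def
      by (smt (verit) powr_ge_zero)+
    then have A: "0 < A" and B: "0 < B" unfolding A_def B_def by auto
    have Aq: "A powr q = SA" unfolding A_def using SA pq by (simp add: powr_powr)
    have Bp: "B powr p = SB" unfolding B_def using SB pq by (simp add: powr_powr)
    have y: "(\<bar>ai\<bar>/A) * (\<bar>bi\<bar>/B) \<le> (\<bar>ai\<bar>/A) powr q / q + (\<bar>bi\<bar>/B) powr p / p" for ai bi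
      using Youngs_inequality[of q p "\<bar>ai\<bar>/A" "\<bar>bi\<bar>/B"] pq A B by (simp add: add.commute)
    have "(\<bar>a1\<bar>/A) * (\<bar>b1\<bar>/B) + (\<bar>a2\<bar>/A) * (\<bar>b2\<bar>/B)
       \<le> ((\<bar>a1\<bar>/A) powr q + (\<bar>a2\<bar>/A) powr q) / q + ((\<bar>b1\<bar>/B) powr p + (\<bar>b2\<bar>/B) powr p) / p"
      using y[of a1 b1] y[of a2 b2] by (simp add: add_divide_distrib)
    also have "(\<bar>a1\<bar>/A) powr q + (\<bar>a2\<bar>/A) powr q = 1"
      using A SA by (simp add: powr_divide Aq add_divide_distrib[symmetric] SA_def)
    also have "(\<bar>b1\<bar>/B) powr p + (\<bar>b2\<bar>/B) powr p = 1"
      using B SB by (simp add: powr_divide Bp add_divide_distrib[symmetric] SB_def)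
    finally have "(\<bar>a1\<bar>/A) * (\<bar>b1\<bar>/B) + (\<bar>a2\<bar>/A) * (\<bar>b2\<bar>/B) \<le> 1" using pq by (simp add: add.commute)
    then have "(\<bar>a1\<bar> * \<bar>b1\<bar> + \<bar>a2\<bar> * \<bar>b2\<bar>) / (A * B) \<le> 1"
      by (simp add: add_divide_distrib)
    then have "\<bar>a1\<bar> * \<bar>b1\<bar> + \<bar>a2\<bar> * \<bar>b2\<bar> \<le> A * B" using A B by (simp add: divide_le_eq)
    then show ?thesis using le unfolding A_def B_def SA_def SB_def by linarith
  qed
qed

lemma holder2: assumes "conjp P Q" shows "x1 * y1 + x2 * y2 \<le> lpn Q x1 x2 * lpn P y1 y2"
proof -
  have le: "x1 * y1 + x2 * y2 \<le> \<bar>x1\<bar> * \<bar>y1\<bar> + \<bar>x2\<bar> * \<bar>y2\<bar>"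
    by (metis abs_ge_self abs_mult add_mono)
  consider "P = \<infinity>" "Q = 1" | "P = 1" "Q = \<infinity>" | p q where "P = ereal p" "Q = ereal q" "1 < p" "1 < q" "1/p + 1/q = 1"
    using assms unfolding conjp_def by blast
  then show ?thesis
  proof cases
    case 1
    have "\<bar>x1\<bar> * \<bar>y1\<bar> + \<bar>x2\<bar> * \<bar>y2\<bar> \<le> \<bar>x1\<bar> * max \<bar>y1\<bar> \<bar>y2\<bar> + \<bar>x2\<bar> * max \<bar>y1\<bar> \<bar>y2\<bar>"
      by (intro add_mono mult_left_mono) auto
    then show ?thesis using le 1 by (simp add: lpn_one lpn_inf algebra_simps)
  next
    case 2
    have "\<bar>x1\<bar> * \<bar>y1\<bar> + \<bar>x2\<bar> * \<bar>y2\<bar> \<le> max \<bar>x1\<bar> \<bar>x2\<bar> * \<bar>y1\<bar> + max \<bar>x1\<bar> \<bar>x2\<bar> * \<bar>y2\<bar>"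
      by (intro add_mono mult_right_mono) auto
    then show ?thesis using le 2 by (simp add: lpn_one lpn_inf algebra_simps)
  next
    case 3
    then show ?thesis using young_sum[of p q x1 y1 x2 y2] by (simp add: lpn_fin)
  qed
qed

lemma sgnpow_mono: fixes a y1 y2 :: real assumes "0 \<le> a" "y2 \<le> y1"
  shows "sgn y2 * \<bar>y2\<bar> powr a \<le> sgn y1 * \<bar>y1\<bar> powr a"
proof -
  consider "0 \<le> y2" | "y2 < 0" "0 \<le> y1" | "y1 < 0" using assms by force
  then show ?thesis
  proof cases
    case 1 then show ?thesis using assms by (auto simp: sgn_if intro: powr_mono2)
  next
    case 2
    have "0 \<le> \<bar>y1\<bar> powr a" "0 \<le> \<bar>y2\<bar> powr a" by simp_all
    moreover have "sgn y2 = -1" using 2 by simp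
    moreover have "0 \<le> sgn y1" using 2 by (simp add: sgn_if)
    ultimately have "sgn y2 * \<bar>y2\<bar> powr a \<le> 0" "0 \<le> sgn y1 * \<bar>y1\<bar> powr a" by simp_all
    then show ?thesis by linarith
  next
    case 3
    then have "\<bar>y1\<bar> powr a \<le> \<bar>y2\<bar> powr a" using assms by (intro powr_mono2) auto
    then show ?thesis using 3 assms by (auto simp: sgn_if)
  qed
qed

lemma attain_fin:
  fixes p q :: real
  assumes pq: "1 < p" "1 < q" "1/p + 1/q = 1" and y: "y2 \<le> y1" and c: "0 \<le> c"
  shows "\<exists>x1 x2. x2 \<le> x1 \<and> (\<bar>x1\<bar> powr q + \<bar>x2\<bar> powr q) powr (1/q) \<le> c
     \<and> x1 * y1 + x2 * y2 = c * (\<bar>y1\<bar> powr p + \<bar>y2\<bar> powr p) powr (1/p)"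
proof -
  define SB where "SB = \<bar>y1\<bar> powr p + \<bar>y2\<bar> powr p"
  define B where "B = SB powr (1/p)"
  show ?thesis
  proof (cases "SB = 0")
    case True
    then have "y1 = 0" "y2 = 0" unfolding SB_def by (smt (verit) powr_eq_0_iff powr_ge_zero abs_eq_0)+
    then show ?thesis using c pq by (intro exI[of _ 0]) simp
  next
    case False
    then have SB: "0 < SB" unfolding SB_def by (smt (verit) powr_ge_zero)
    then have B: "0 < B" unfolding B_def by simp
    have Bp: "B powr p = SB" unfolding B_def using SB pq by (simp add: powr_powr)
    have pq2: "(p - 1) * q = p" using pq by (simp add: field_simps)
    have Bp2: "B powr p = B * B powr (p - 1)" using B by (simp add: powr_mult_base)
    define x where "x t = c * (sgn t * \<bar>t\<bar> powr (p - 1)) / B powr (p - 1)" for t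
    have mono: "x y2 \<le> x y1" unfolding x_def using sgnpow_mono[of "p - 1" y2 y1] pq y c B
      by (intro divide_right_mono mult_left_mono) auto
    have xy: "x t * t = c * \<bar>t\<bar> powr p / B powr (p - 1)" for t
    proof -
      have "sgn t * \<bar>t\<bar> powr (p - 1) * t = \<bar>t\<bar> * \<bar>t\<bar> powr (p - 1)"
        by (simp add: sgn_if)
      also have "\<dots> = \<bar>t\<bar> powr p" by (simp add: powr_mult_base)
      finally show ?thesis unfolding x_def by (simp add: field_simps)
    qed
    have sum: "x y1 * y1 + x y2 * y2 = c * B"
    proof -
      have "x y1 * y1 + x y2 * y2 = c * SB / B powr (p - 1)" unfolding xy SB_def by (simp add: add_divide_distrib distrib_left)
      also have "\<dots> = c * B" using B by (simp add: Bp[symmetric] Bp2)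
      finally show ?thesis .
    qed
    have ax: "\<bar>x t\<bar> powr q = c powr q * \<bar>t\<bar> powr p / SB" for t
    proof -
      have "\<bar>x t\<bar> = c * \<bar>t\<bar> powr (p - 1) / B powr (p - 1)" unfolding x_def using c B
        by (simp add: abs_mult abs_sgn_eq sgn_if)
      then have "\<bar>x t\<bar> powr q = c powr q * (\<bar>t\<bar> powr (p - 1)) powr q / (B powr (p - 1)) powr q"
        by (simp add: powr_mult powr_divide)
      also have "\<dots> = c powr q * \<bar>t\<bar> powr p / SB" by (simp add: powr_powr pq2 Bp)
      finally show ?thesis .
    qed
    have "(\<bar>x y1\<bar> powr q + \<bar>x y2\<bar> powr q) powr (1/q) = (c powr q) powr (1/q)"
    proof -
      have "c powr q * \<bar>y1\<bar> powr p / SB + c powr q * \<bar>y2\<bar> powr p / SB = c powr q * SB / SB"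
        unfolding SB_def by (simp add: add_divide_distrib distrib_left)
      then show ?thesis unfolding ax using SB by simp
    qed
    also have "\<dots> = c" using c pq by (simp add: powr_powr)
    finally show ?thesis using mono sum unfolding B_def SB_def by (intro exI[of _ "x y1"] exI[of _ "x y2"]) auto
  qed
qed

lemma attain2: assumes "conjp P Q" "y2 \<le> y1" "0 \<le> c"
  shows "\<exists>x1 x2. x2 \<le> x1 \<and> lpn Q x1 x2 \<le> c \<and> x1 * y1 + x2 * y2 = c * lpn P y1 y2"
proof -
  consider "P = \<infinity>" "Q = 1" | "P = 1" "Q = \<infinity>" | p q where "P = ereal p" "Q = ereal q" "1 < p" "1 < q" "1/p + 1/q = 1"
    using assms unfolding conjp_def by blast
  then show ?thesis
  proof cases
    case 1
    show ?thesis
    proof (cases "0 \<le> y1 + y2")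
      case True
      then show ?thesis using 1 assms
        by (intro exI[of _ c] exI[of _ 0]) (auto simp: lpn_one lpn_inf max_def)
    next
      case False
      then show ?thesis using 1 assms
        by (intro exI[of _ 0] exI[of _ "-c"]) (auto simp: lpn_one lpn_inf max_def)
    qed
  next
    case 2
    show ?thesis using 2 assms
      by (intro exI[of _ "c * sgn y1"] exI[of _ "c * sgn y2"])
         (auto simp: lpn_one lpn_inf max_def sgn_if algebra_simps)
  next
    case 3
    then show ?thesis using attain_fin[of p q y2 y1 c] assms by (simp add: lpn_fin)
  qed
qed

definition mc :: "real^2^2 \<Rightarrow> real" where "mc A = (A$1$1 + A$2$2) / 2"
definition md :: "real^2^2 \<Rightarrow> real" where "md A = (A$1$1 - A$2$2) / 2"
definition mr :: "real^2^2 \<Rightarrow> real" where "mr A = sqrt ((md A)\<^sup>2 + (A$1$2)\<^sup>2)"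

definition mT :: "real^2^2 \<Rightarrow> real" where
  "mT A = (A$1$1)\<^sup>2 + (A$1$2)\<^sup>2 + (A$2$1)\<^sup>2 + (A$2$2)\<^sup>2"
definition mD :: "real^2^2 \<Rightarrow> real" where
  "mD A = A$1$1 * A$2$2 - A$1$2 * A$2$1"

lemma sym_iff: "transpose A = (A::real^2^2) \<longleftrightarrow> A$1$2 = A$2$1"
  by (auto simp: vec_eq_iff forall_2 transpose_def)

lemma trace_AA: "trace (transpose A ** A) = mT A"
  unfolding trace_tm mT_def by (simp add: sum_2 power2_eq_square)

lemma det_AA: "det (transpose A ** A) = (mD A)\<^sup>2"
proof -
  have "det (transpose A ** A) = det (transpose A) * det A" by (rule det_mul)
  also have "\<dots> = det A * det A" by (simp only: det_transpose)
  finally show ?thesis by (simp add: det_2 mD_def power2_eq_square)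
qed

lemma sv1_formula: "sv1 A = sqrt ((mT A + sqrt ((mT A)\<^sup>2 - 4 * (mD A)\<^sup>2)) / 2)"
  unfolding sv1_def Let_def trace_AA det_AA ..

lemma sv2_formula: "sv2 A = sqrt ((mT A - sqrt ((mT A)\<^sup>2 - 4 * (mD A)\<^sup>2)) / 2)"
  unfolding sv2_def Let_def trace_AA det_AA ..

lemma mD_bound: "2 * \<bar>mD A\<bar> \<le> mT A"
proof -
  have a: "2 * \<bar>x * y\<bar> \<le> x\<^sup>2 + y\<^sup>2" for x y :: real
  proof -
    have "0 \<le> (\<bar>x\<bar> - \<bar>y\<bar>)\<^sup>2" by simp
    then show ?thesis by (simp add: power2_eq_square algebra_simps abs_mult)
  qed
  have "2 * \<bar>mD A\<bar> \<le> 2 * \<bar>A$1$1 * A$2$2\<bar> + 2 * \<bar>A$1$2 * A$2$1\<bar>" unfolding mD_def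
    using abs_triangle_ineq4[of "A$1$1 * A$2$2" "A$1$2 * A$2$1"] by (simp only: mult_2[symmetric] distrib_left[symmetric] mult_le_cancel_left_pos zero_less_numeral)
  also have "\<dots> \<le> mT A" using a[of "A$1$1" "A$2$2"] a[of "A$1$2" "A$2$1"] unfolding mT_def by linarith
  finally show ?thesis .
qed

lemma disc_nonneg: "0 \<le> (mT A)\<^sup>2 - 4 * (mD A)\<^sup>2"
proof -
  have "(2 * \<bar>mD A\<bar>)\<^sup>2 \<le> (mT A)\<^sup>2" using mD_bound[of A] by (intro power_mono) auto
  then show ?thesis by (simp add: power_mult_distrib)
qed

lemma mT_nonneg: "0 \<le> mT A" unfolding mT_def by simp

lemma disc_le: "sqrt ((mT A)\<^sup>2 - 4 * (mD A)\<^sup>2) \<le> mT A"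
proof -
  have "sqrt ((mT A)\<^sup>2 - 4 * (mD A)\<^sup>2) \<le> sqrt ((mT A)\<^sup>2)" by (intro real_sqrt_le_mono) simp
  then show ?thesis using mT_nonneg[of A] by simp
qed

lemma sv_nonneg: "0 \<le> sv1 A" "0 \<le> sv2 A"
  unfolding sv1_formula sv2_formula using disc_le[of A] disc_nonneg[of A] mT_nonneg[of A] by simp_all

lemma lpn_abs: "lpn P \<bar>x\<bar> \<bar>y\<bar> = lpn P x y" by (simp add: lpn_def)
lemma lpn_swap: "lpn P x y = lpn P y x" by (simp add: lpn_def add.commute max.commute)

lemma schatten_lpn: "schatten P A = lpn P (sv1 A) (sv2 A)"
  using sv_nonneg[of A] by (simp add: schatten_def lpn_def)

lemma mr_nonneg: "0 \<le> mr A" by (simp add: mr_def)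

lemma mr_sq: "(mr A)\<^sup>2 = (md A)\<^sup>2 + (A$1$2)\<^sup>2" by (simp add: mr_def)
lemma mr_sq': "mr A * mr A = (md A)\<^sup>2 + (A$1$2)\<^sup>2" using mr_sq[of A] by (simp add: power2_eq_square)

lemma sym_mT: "A$1$2 = A$2$1 \<Longrightarrow> mT A = 2 * (mc A)\<^sup>2 + 2 * (mr A)\<^sup>2"
  by (simp add: mT_def mc_def mr_sq md_def mr_sq' power2_eq_square field_simps)

lemma sym_mD: "A$1$2 = A$2$1 \<Longrightarrow> mD A = (mc A)\<^sup>2 - (mr A)\<^sup>2"
  by (simp add: mD_def mc_def mr_sq md_def mr_sq' power2_eq_square field_simps)

lemma sym_sv: assumes "A$1$2 = A$2$1"
  shows "sv1 A = \<bar>mc A\<bar> + mr A" "sv2 A = \<bar>\<bar>mc A\<bar> - mr A\<bar>"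
proof -
  have d: "(mT A)\<^sup>2 - 4 * (mD A)\<^sup>2 = (4 * \<bar>mc A\<bar> * mr A)\<^sup>2"
    unfolding sym_mT[OF assms] sym_mD[OF assms] by (simp add: power2_eq_square algebra_simps)
  have s: "sqrt ((mT A)\<^sup>2 - 4 * (mD A)\<^sup>2) = 4 * \<bar>mc A\<bar> * mr A"
    unfolding d using mr_nonneg[of A] by simp
  have t: "mT A = 2 * \<bar>mc A\<bar>\<^sup>2 + 2 * (mr A)\<^sup>2" using sym_mT[OF assms] by simp
  have g1: "(2 * a\<^sup>2 + 2 * r\<^sup>2 + 4 * a * r) / 2 = (a + r)\<^sup>2" for a r :: real
    by (simp add: power2_eq_square field_simps)
  have g2: "(2 * a\<^sup>2 + 2 * r\<^sup>2 - 4 * a * r) / 2 = (a - r)\<^sup>2" for a r :: real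
    by (simp add: power2_eq_square field_simps)
  have e1: "(mT A + 4 * \<bar>mc A\<bar> * mr A) / 2 = (\<bar>mc A\<bar> + mr A)\<^sup>2"
    unfolding t by (rule g1)
  have e2: "(mT A - 4 * \<bar>mc A\<bar> * mr A) / 2 = (\<bar>mc A\<bar> - mr A)\<^sup>2"
    unfolding t by (rule g2)
  show "sv1 A = \<bar>mc A\<bar> + mr A" unfolding sv1_formula s e1 using mr_nonneg[of A] by simp
  show "sv2 A = \<bar>\<bar>mc A\<bar> - mr A\<bar>" unfolding sv2_formula s e2 by simp
qed

lemma schatten_sym: assumes "A$1$2 = A$2$1"
  shows "schatten P A = lpn P (mc A + mr A) (mc A - mr A)"
proof (cases "0 \<le> mc A")
  case True
  then show ?thesis unfolding schatten_lpn sym_sv[OF assms] using mr_nonneg[of A]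
    by (simp add: lpn_def)
next
  case False
  have a1: "\<bar>mc A\<bar> + mr A = \<bar>mc A - mr A\<bar>" "\<bar>\<bar>mc A\<bar> - mr A\<bar> = \<bar>mc A + mr A\<bar>"
    using False mr_nonneg[of A] by auto
  have "lpn P (\<bar>mc A\<bar> + mr A) \<bar>\<bar>mc A\<bar> - mr A\<bar> = lpn P \<bar>mc A - mr A\<bar> \<bar>mc A + mr A\<bar>"
    unfolding a1 ..
  also have "\<dots> = lpn P (mc A + mr A) (mc A - mr A)" by (simp add: lpn_abs lpn_swap[of P "mc A - mr A"])
  finally show ?thesis unfolding schatten_lpn sym_sv[OF assms] .
qed

lemma schatten_nonneg: "0 \<le> schatten P A" unfolding schatten_lpn by (rule lpn_nonneg)

lemma cs2: "a1 * b1 + a2 * b2 \<le> sqrt (a1\<^sup>2 + a2\<^sup>2) * sqrt (b1\<^sup>2 + b2\<^sup>2)"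
proof -
  have e: "(a1\<^sup>2 + a2\<^sup>2) * (b1\<^sup>2 + b2\<^sup>2) = (a1 * b1 + a2 * b2)\<^sup>2 + (a1 * b2 - a2 * b1)\<^sup>2"
    by (simp add: power2_eq_square algebra_simps)
  have "a1 * b1 + a2 * b2 \<le> sqrt ((a1 * b1 + a2 * b2)\<^sup>2)" by simp
  also have "\<dots> \<le> sqrt ((a1\<^sup>2 + a2\<^sup>2) * (b1\<^sup>2 + b2\<^sup>2))" unfolding e by (intro real_sqrt_le_mono) simp
  finally show ?thesis by (simp add: real_sqrt_mult)
qed

lemma trace_sym: assumes "N$1$2 = N$2$1" "S$1$2 = S$2$1"
  shows "trace (transpose N ** S) = 2 * (mc N * mc S + md N * md S + N$1$2 * S$1$2)"
  unfolding trace_tm using assms by (simp add: sum_2 mc_def md_def field_simps)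

lemma mat_holder: assumes "conjp P Q" "N$1$2 = N$2$1" "S$1$2 = S$2$1"
  shows "trace (transpose N ** S) \<le> schatten Q N * schatten P S"
proof -
  have "md N * md S + N$1$2 * S$1$2 \<le> mr N * mr S" unfolding mr_def by (rule cs2)
  then have "trace (transpose N ** S) \<le> (mc N + mr N) * (mc S + mr S) + (mc N - mr N) * (mc S - mr S)"
    unfolding trace_sym[OF assms(2,3)] by (simp add: algebra_simps)
  also have "\<dots> \<le> lpn Q (mc N + mr N) (mc N - mr N) * lpn P (mc S + mr S) (mc S - mr S)"
    by (rule holder2[OF assms(1)])
  finally show ?thesis unfolding schatten_sym[OF assms(2)] schatten_sym[OF assms(3)] .
qed

lemma mat_attain: assumes "conjp P Q" "S$1$2 = S$2$1" "0 \<le> c"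
  shows "\<exists>N. N$1$2 = N$2$1 \<and> schatten Q N \<le> c \<and> trace (transpose N ** S) = c * schatten P S"
proof -
  have "mc S - mr S \<le> mc S + mr S" using mr_nonneg[of S] by simp
  from attain2[OF assms(1) this assms(3)] obtain x1 x2 where
    x: "x2 \<le> x1" "lpn Q x1 x2 \<le> c" "x1 * (mc S + mr S) + x2 * (mc S - mr S) = c * lpn P (mc S + mr S) (mc S - mr S)"
    by blast
  define m0 where "m0 = (x1 + x2) / 2"
  define e where "e = (x1 - x2) / 2"
  have e0: "0 \<le> e" using x by (simp add: e_def)
  define c1 where "c1 = (if 0 < mr S then md S / mr S else 1)"
  define c2 where "c2 = (if 0 < mr S then S$1$2 / mr S else 0)"
  have cc: "c1\<^sup>2 + c2\<^sup>2 = 1"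
  proof (cases "0 < mr S")
    case True
    then have "(md S)\<^sup>2 + (S$1$2)\<^sup>2 = (mr S)\<^sup>2" unfolding mr_def by simp
    then show ?thesis using True by (simp add: c1_def c2_def power_divide add_divide_distrib[symmetric])
  qed (simp add: c1_def c2_def)
  have cs: "c1 * md S + c2 * S$1$2 = mr S"
  proof (cases "0 < mr S")
    case True
    then have "(md S)\<^sup>2 + (S$1$2)\<^sup>2 = (mr S)\<^sup>2" unfolding mr_def by simp
    then show ?thesis using True by (simp add: c1_def c2_def power2_eq_square add_divide_distrib[symmetric])
  next
    case False
    then have "mr S = 0" using mr_nonneg[of S] by simp
    then have "md S = 0" "S$1$2 = 0" unfolding mr_def by (simp_all add: sum_power2_eq_zero_iff)
    then show ?thesis using \<open>mr S = 0\<close> by simp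
  qed
  define N :: "real^2^2" where "N = vector [vector [m0 + e * c1, e * c2], vector [e * c2, m0 - e * c1]]"
  have N: "N$1$1 = m0 + e * c1" "N$1$2 = e * c2" "N$2$1 = e * c2" "N$2$2 = m0 - e * c1"
    by (simp_all add: N_def)
  have mcN: "mc N = m0" by (simp add: mc_def N)
  have mdN: "md N = e * c1" by (simp add: md_def N)
  have mrN: "mr N = e"
  proof -
    have "(md N)\<^sup>2 + (N$1$2)\<^sup>2 = e\<^sup>2 * (c1\<^sup>2 + c2\<^sup>2)" by (simp add: mdN N power_mult_distrib algebra_simps)
    then show ?thesis unfolding mr_def using cc e0 by simp
  qed
  have symN: "N$1$2 = N$2$1" by (simp add: N)
  have "schatten Q N = lpn Q x1 x2" unfolding schatten_sym[OF symN] mcN mrN m0_def e_def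
    by (simp add: field_simps)
  moreover have "trace (transpose N ** S) = c * schatten P S"
  proof -
    have "trace (transpose N ** S) = 2 * (m0 * mc S + e * (c1 * md S + c2 * S$1$2))"
      unfolding trace_sym[OF symN assms(2)] mcN mdN N by (simp add: algebra_simps)
    also have "\<dots> = x1 * (mc S + mr S) + x2 * (mc S - mr S)" unfolding cs m0_def e_def by (simp add: field_simps)
    finally show ?thesis unfolding schatten_sym[OF assms(2)] x(3) .
  qed
  ultimately show ?thesis using symN x(2) by auto
qed

lemma trace_lin: "trace (transpose X ** (a *\<^sub>R A + b *\<^sub>R B)) = a * trace (transpose X ** A) + b * trace (transpose X ** (B::real^2^2))"
  unfolding trace_tm by (simp add: sum_2 algebra_simps)

lemma schatten_ball_convex: assumes "conjp P Q" "N1$1$2 = N1$2$1" "N2$1$2 = N2$2$1"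
  "schatten Q N1 \<le> c" "schatten Q N2 \<le> c" "0 \<le> t" "t \<le> 1"
  shows "schatten Q ((1 - t) *\<^sub>R N1 + t *\<^sub>R N2) \<le> c"
proof -
  define N where "N = (1 - t) *\<^sub>R N1 + t *\<^sub>R N2"
  have symN: "N$1$2 = N$2$1" using assms by (simp add: N_def)
  obtain X where X: "X$1$2 = X$2$1" "schatten P X \<le> 1" "trace (transpose X ** N) = 1 * schatten Q N"
    using mat_attain[OF conjp_sym[OF assms(1)] symN, of 1] by auto
  have h1: "trace (transpose X ** N1) \<le> schatten P X * schatten Q N1"
    by (rule mat_holder[OF conjp_sym[OF assms(1)] X(1) assms(2)])
  have h2: "trace (transpose X ** N2) \<le> schatten P X * schatten Q N2"
    by (rule mat_holder[OF conjp_sym[OF assms(1)] X(1) assms(3)])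
  have b: "schatten P X * schatten Q Ni \<le> c" if "schatten Q Ni \<le> c" for Ni
  proof -
    have "schatten P X * schatten Q Ni \<le> 1 * schatten Q Ni"
      using X(2) schatten_nonneg[of Q Ni] by (intro mult_right_mono) auto
    then show ?thesis using that by simp
  qed
  have "schatten Q N = (1 - t) * trace (transpose X ** N1) + t * trace (transpose X ** N2)"
    using X(3) unfolding N_def trace_lin by simp
  also have "\<dots> \<le> (1 - t) * c + t * c"
    using h1 h2 b[OF assms(4)] b[OF assms(5)] assms(6,7)
    by (intro add_mono mult_left_mono) auto
  finally show ?thesis unfolding N_def by (simp add: algebra_simps)
qed

definition expo :: "ereal \<Rightarrow> bool" where
  "expo P \<longleftrightarrow> P = \<infinity> \<or> (\<exists>p. 1 \<le> p \<and> P = ereal p)"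

lemma conjp_expo: "conjp P Q \<Longrightarrow> expo P" "conjp P Q \<Longrightarrow> expo Q"
  unfolding conjp_def expo_def by (auto simp: one_ereal_def)

lemma lpn_ge: assumes "expo P" shows "\<bar>x\<bar> \<le> lpn P x y" "\<bar>y\<bar> \<le> lpn P x y"
proof -
  have "\<bar>x\<bar> \<le> lpn P x y" if e: "expo P" for x y
  proof (cases "P = \<infinity>")
    case True then show ?thesis by (simp add: lpn_inf)
  next
    case False
    then obtain p where p: "1 \<le> p" "P = ereal p" using e unfolding expo_def by auto
    have "\<bar>x\<bar> = (\<bar>x\<bar> powr p) powr (1/p)" using p by (simp add: powr_powr)
    also have "\<dots> \<le> (\<bar>x\<bar> powr p + \<bar>y\<bar> powr p) powr (1/p)"
      using p by (intro powr_mono2) auto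
    finally show ?thesis using p by (simp add: lpn_fin)
  qed
  then show "\<bar>x\<bar> \<le> lpn P x y" "\<bar>y\<bar> \<le> lpn P x y" using assms lpn_swap by metis+
qed

lemma entry_bound: assumes "expo P" "A$1$2 = A$2$1"
  shows "\<bar>A$i$j\<bar> \<le> schatten P A"
proof -
  have s: "\<bar>mc A\<bar> + mr A \<le> schatten P A"
  proof -
    have "\<bar>mc A + mr A\<bar> \<le> lpn P (mc A + mr A) (mc A - mr A)" by (rule lpn_ge(1)[OF assms(1)])
    moreover have "\<bar>mc A - mr A\<bar> \<le> lpn P (mc A + mr A) (mc A - mr A)"
      using lpn_ge(1)[OF assms(1), of "mc A - mr A" "mc A + mr A"] lpn_swap by metis
    ultimately show ?thesis unfolding schatten_sym[OF assms(2)] using mr_nonneg[of A]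
      by (cases "0 \<le> mc A") auto
  qed
  have md: "\<bar>md A\<bar> \<le> mr A" unfolding mr_def by (rule real_sqrt_ge_abs1)
  have a12: "\<bar>A$1$2\<bar> \<le> mr A" unfolding mr_def by (rule real_sqrt_ge_abs2)
  have "A$1$1 = mc A + md A" "A$2$2 = mc A - md A" by (simp_all add: mc_def md_def field_simps)
  then have "\<bar>A$1$1\<bar> \<le> \<bar>mc A\<bar> + mr A" "\<bar>A$2$2\<bar> \<le> \<bar>mc A\<bar> + mr A" "\<bar>A$1$2\<bar> \<le> \<bar>mc A\<bar> + mr A" "\<bar>A$2$1\<bar> \<le> \<bar>mc A\<bar> + mr A"
    using md a12 assms(2) by auto
  then show ?thesis using s exhaust_2[of i] exhaust_2[of j] by auto
qed

lemma cont_mT: "continuous_on S mT" unfolding mT_def by (intro continuous_intros)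
lemma cont_mD: "continuous_on S mD" unfolding mD_def by (intro continuous_intros)

lemma cont_sv: "continuous_on S sv1" "continuous_on S sv2"
  unfolding sv1_formula[abs_def] sv2_formula[abs_def] by (intro continuous_intros cont_mT cont_mD | simp)+

lemma cont_schatten: assumes "expo P" shows "continuous_on S (schatten P)"
proof (cases "P = \<infinity>")
  case True
  then show ?thesis unfolding schatten_def[abs_def] by (simp add: continuous_intros cont_sv)
next
  case False
  then obtain p where p: "1 \<le> p" "P = ereal p" using assms unfolding expo_def by auto
  have "continuous_on S (\<lambda>A. (sv1 A powr p + sv2 A powr p) powr (1/p))"
    using p sv_nonneg
    by (intro continuous_on_powr' continuous_intros cont_sv) auto
  then show ?thesis unfolding schatten_def[abs_def] using p by simp
qed

lemma norm_bound: assumes "expo P" "A$1$2 = A$2$1" shows "norm A \<le> 4 * schatten P A"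
proof -
  have "norm A \<le> (\<Sum>i\<in>UNIV. norm (A$i))" unfolding norm_vec_def by (rule L2_set_le_sum) simp
  also have "\<dots> \<le> (\<Sum>i\<in>UNIV. \<Sum>j\<in>UNIV. \<bar>A$i$j\<bar>)" by (intro sum_mono norm_le_l1_cart)
  also have "\<dots> \<le> (\<Sum>i\<in>(UNIV::2 set). \<Sum>j\<in>(UNIV::2 set). schatten P A)"
    by (intro sum_mono entry_bound[OF assms])
  also have "\<dots> = 4 * schatten P A" by (simp add: sum_2)
  finally show ?thesis .
qed

lemma compact_PiE_const:
  fixes C :: "'b::topological_space set"
  assumes "compact C" shows "compact (PiE I (\<lambda>_. C) :: ('a \<Rightarrow> 'b) set)"
proof -
  define S where "S i = (if i \<in> I then C else {undefined})" for i
  have e: "PiE I (\<lambda>_. C) = PiE UNIV S"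
    unfolding S_def by (auto simp: PiE_iff extensional_def) (metis (full_types) singletonD)+
  have "compactin (product_topology (\<lambda>_. euclidean) UNIV) (PiE UNIV S)"
    unfolding compactin_PiE using assms by (auto simp: S_def)
  then show ?thesis unfolding e euclidean_product_topology by simp
qed

lemma cont_coord [continuous_intros]: "continuous_on S (\<lambda>u. u s)"
  by (rule continuous_on_subset[OF continuous_on_product_coordinates]) simp

lemma cont_coord': "continuous_on S f \<Longrightarrow> continuous_on S (\<lambda>x. f x s)"
  by (rule continuous_on_product_then_coordinatewise)

lemma cont_conv_l:
  "(\<And>s. continuous_on S (\<lambda>z. x z s)) \<Longrightarrow> continuous_on S (\<lambda>z. conv M N (x z) y r)"
  unfolding conv_def by (intro continuous_on_sum continuous_on_mult_right) auto

lemma cont_conv_r: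
  "(\<And>s. continuous_on S (\<lambda>z. y z s)) \<Longrightarrow> continuous_on S (\<lambda>z. conv M N x (y z) r)"
  unfolding conv_def by (intro continuous_on_sum continuous_on_mult_left) auto

lemma vin_cong: "(\<And>r. r \<in> grid M N \<Longrightarrow> v r = v' r) \<Longrightarrow> (\<And>r. r \<in> grid M N \<Longrightarrow> w r = w' r) \<Longrightarrow> vin M N v w = vin M N v' w'"
  unfolding vin_def by (intro sum.cong) auto

lemma vin_diff_r: "vin M N v (\<lambda>r. a r - b r) = vin M N v a - vin M N v b"
  unfolding vin_def by (simp add: inner_diff_right sum_subtractf)
lemma vin_diff_l: "vin M N (\<lambda>r. a r - b r) v = vin M N a v - vin M N b v"
  unfolding vin_def by (simp add: inner_diff_left sum_subtractf)
lemma vin_add_l: "vin M N (\<lambda>r. a r + b r) v = vin M N a v + vin M N b v"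
  unfolding vin_def by (simp add: inner_add_left sum.distrib)
lemma vin_add_r: "vin M N v (\<lambda>r. a r + b r) = vin M N v a + vin M N v b"
  unfolding vin_def by (simp add: inner_add_right sum.distrib)
lemma vin_scale_l: "vin M N (\<lambda>r. t *\<^sub>R a r) v = t * vin M N a v"
  unfolding vin_def by (simp add: sum_distrib_left)
lemma vin_scale_r: "vin M N v (\<lambda>r. t *\<^sub>R a r) = t * vin M N v a"
  unfolding vin_def by (simp add: sum_distrib_left)
lemma vin_comm: "vin M N v w = vin M N w v"
  unfolding vin_def by (simp add: inner_commute)
lemma vin_nonneg: "0 \<le> vin M N v v"
  unfolding vin_def by (intro sum_nonneg) simp
lemma vin_zero: "vin M N v v = 0 \<Longrightarrow> r \<in> grid M N \<Longrightarrow> v r = 0"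
  unfolding vin_def by (subst (asm) sum_nonneg_eq_0_iff) auto

lemma mcf_cong: "(\<And>s. s \<in> grid M N \<Longrightarrow> Nm s = Nm' s) \<Longrightarrow> mat_conv_flip M N Nm d r = mat_conv_flip M N Nm' d r"
  unfolding mat_conv_flip_def by (intro arg_cong[where f=vec_lambda] ext sum.cong refl conv_cong) auto

lemma mcf_zero: "(\<And>s. s \<in> grid M N \<Longrightarrow> Nm s = 0) \<Longrightarrow> mat_conv_flip M N Nm d r = 0"
  unfolding mat_conv_flip_def conv_def by (simp add: vec_eq_iff)

lemma mcf_lin: assumes "\<And>s. s \<in> grid M N \<Longrightarrow> N3 s = N1 s + t *\<^sub>R (N2 s - N1 s)"
  shows "mat_conv_flip M N N3 d r = mat_conv_flip M N N1 d r + t *\<^sub>R (mat_conv_flip M N N2 d r - mat_conv_flip M N N1 d r)"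
proof -
  have e: "conv M N (\<lambda>s. N3 s $i$j) y r = conv M N (\<lambda>s. N1 s $i$j) y r + t * (conv M N (\<lambda>s. N2 s $i$j) y r - conv M N (\<lambda>s. N1 s $i$j) y r)" for i j y
  proof -
    have "conv M N (\<lambda>s. N3 s $i$j) y r = conv M N (\<lambda>s. N1 s $i$j + t * (N2 s $i$j - N1 s $i$j)) y r"
      by (rule conv_cong) (simp_all add: assms)
    also have "\<dots> = conv M N (\<lambda>s. N1 s $i$j) y r + t * (conv M N (\<lambda>s. N2 s $i$j) y r - conv M N (\<lambda>s. N1 s $i$j) y r)"
      unfolding conv_def by (simp add: algebra_simps sum.distrib sum_subtractf sum_distrib_left)
    finally show ?thesis .
  qed
  show ?thesis unfolding mat_conv_flip_def vec_eq_iff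
    by (simp add: e algebra_simps sum.distrib sum_subtractf sum_distrib_left)
qed

lemma minner_cong: "(\<And>r. r \<in> grid M N \<Longrightarrow> A r = A' r) \<Longrightarrow> minner M N A B = minner M N A' B"
  unfolding minner_def by (intro sum.cong) auto

lemma sym_grad_cong: assumes "\<And>s. s \<in> grid M N \<Longrightarrow> u s = u' s" shows "sym_grad M N d u r = sym_grad M N d u' r"
proof -
  have "conv M N (\<lambda>s. u s $ i) (d j) r = conv M N (\<lambda>s. u' s $ i) (d j) r" for i j
    by (rule conv_cong) (simp_all add: assms)
  moreover have "conv M N (d i) (\<lambda>s. u s $ j) r = conv M N (d i) (\<lambda>s. u' s $ j) r" for i j
    by (rule conv_cong) (simp_all add: assms)
  ultimately show ?thesis unfolding sym_grad_def by simp
qed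

lemma primal_cong: "(\<And>s. s \<in> grid M N \<Longrightarrow> u s = u' s) \<Longrightarrow> GHS_primal M N d p g as af u = GHS_primal M N d p g as af u'"
  unfolding GHS_primal_def norm_1_2_def norm_1_S_def
  by (intro arg_cong2[where f="(+)"] arg_cong2[where f="(*)"] sum.cong refl arg_cong[where f="schatten _"] sym_grad_cong) auto

lemma cont_sym_grad: "continuous_on S (\<lambda>u. sym_grad M N d u r)"
  unfolding sym_grad_def
  by (intro continuous_on_vec_lambda continuous_intros cont_conv_l cont_conv_r continuous_on_component cont_coord)

lemma cont_primal: assumes "expo (ereal p)" shows "continuous_on S (GHS_primal M N d p g as af)"
  unfolding GHS_primal_def norm_1_2_def norm_1_S_def
  by (intro continuous_intros continuous_on_compose2[OF cont_schatten[OF assms] cont_sym_grad]) auto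

context
  fixes M N :: nat and p :: real and q :: ereal and as af :: real and g :: img and d :: "2 \<Rightarrow> img"
  assumes MN: "0 < M" "0 < N" and pq: "conjp (ereal p) q" and as: "0 < as" and af: "0 < af"
begin

abbreviation "G \<equiv> grid M N"
abbreviation "ag \<equiv> grad_conv M N d g"
abbreviation "F \<equiv> GHS_primal M N d p g as af"
abbreviation "Bsym \<equiv> {S::real^2^2. S$1$2 = S$2$1 \<and> schatten q S \<le> as}"
abbreviation "Bd \<equiv> cball (0::real^2) af \<times> Bsym"

lemma G_ne: "G \<noteq> {}" using MN by (auto simp: grid_def)

lemma expo_p: "expo (ereal p)" using conjp_expo(1)[OF pq] .
lemma expo_q: "expo q" using conjp_expo(2)[OF pq] .

lemma Bsym_closed: "closed Bsym"
proof -
  have "closed {S::real^2^2. S$1$2 = S$2$1}"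
    by (intro closed_Collect_eq continuous_intros)
  moreover have "closed {S::real^2^2. schatten q S \<le> as}"
    by (intro closed_Collect_le cont_schatten[OF expo_q] continuous_intros)
  ultimately show ?thesis by (simp add: Collect_conj_eq closed_Int)
qed

lemma Bsym_bounded: "bounded Bsym"
  unfolding bounded_iff using norm_bound[OF expo_q] by (intro exI[of _ "4 * as"]) force

lemma Bsym_compact: "compact Bsym"
  using Bsym_closed Bsym_bounded by (simp add: compact_eq_bounded_closed)

lemma Bsym_convex: "convex Bsym"
proof (rule convexI)
  fix x y :: "real^2^2" and u v :: real
  assume x: "x \<in> Bsym" and y: "y \<in> Bsym" and uv0: "0 \<le> u" "0 \<le> v" "u + v = 1"
  then have uv: "0 \<le> u \<and> 0 \<le> v \<and> u + v = 1" by simp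
  then have u: "u = 1 - v" by simp
  show "u *\<^sub>R x + v *\<^sub>R y \<in> Bsym"
    using schatten_ball_convex[OF pq, of x y as v] x y uv unfolding u by auto
qed

lemma zero_Bsym: "0 \<in> Bsym"
  using schatten_sym[of 0 q] as by (simp add: mc_def mr_def md_def lpn_def)

lemma Bd_compact: "compact Bd" using Bsym_compact by (simp add: compact_Times)
lemma Bd_convex: "convex Bd" using Bsym_convex by (simp add: convex_Times)
lemma zero_Bd: "0 \<in> Bd" using zero_Bsym af by (simp add: zero_prod_def)

lemma vec_dual: "norm (y::real^2) \<le> af \<Longrightarrow> inner y v \<le> af * norm v"
  by (metis norm_cauchy_schwarz mult_right_mono norm_ge_zero order_trans)

lemma vec_attain: "\<exists>y::real^2. norm y \<le> af \<and> inner y v = af * norm v"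
proof (cases "v = 0")
  case True then show ?thesis using af by (intro exI[of _ 0]) simp
next
  case False
  then show ?thesis using af
    by (intro exI[of _ "(af / norm v) *\<^sub>R v"]) (simp add: power2_norm_eq_inner[symmetric] power2_eq_square)
qed

lemma mat_dual: "S \<in> Bsym \<Longrightarrow> A$1$2 = A$2$1 \<Longrightarrow> trace (transpose S ** A) \<le> as * schatten (ereal p) A"
  using mat_holder[OF pq, of S A] schatten_nonneg[of "ereal p" A]
  by (auto intro: order_trans mult_right_mono)

lemma mat_dual_attain: "A$1$2 = A$2$1 \<Longrightarrow> \<exists>S\<in>Bsym. trace (transpose S ** A) = as * schatten (ereal p) A"
  using mat_attain[OF pq, of A as] as by auto

definition Lg :: "vimg \<Rightarrow> (nat \<times> nat \<Rightarrow> (real^2) \<times> (real^2^2)) \<Rightarrow> real" where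
  "Lg u Y = vin M N (\<lambda>r. fst (Y r)) (\<lambda>r. ag r - u r) + minner M N (\<lambda>r. snd (Y r)) (sym_grad M N d u)"

lemma sym_grad_sym': "r \<in> G \<Longrightarrow> sym_grad M N d u r $1$2 = sym_grad M N d u r $2$1"
  using sym_grad_sym[of r M N d u] by (simp add: sym_iff)

lemma lag_le: assumes "\<And>r. r \<in> G \<Longrightarrow> Y r \<in> Bd" shows "Lg u Y \<le> F u"
proof -
  have "vin M N (\<lambda>r. fst (Y r)) (\<lambda>r. ag r - u r) \<le> (\<Sum>r\<in>G. af * norm (ag r - u r))"
    unfolding vin_def using assms by (intro sum_mono vec_dual) (auto simp: mem_Times_iff)
  moreover have "minner M N (\<lambda>r. snd (Y r)) (sym_grad M N d u) \<le> (\<Sum>r\<in>G. as * schatten (ereal p) (sym_grad M N d u r))"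
    unfolding minner_def using assms by (intro sum_mono mat_dual sym_grad_sym') (auto simp: mem_Times_iff)
  ultimately show ?thesis unfolding Lg_def GHS_primal_def norm_1_2_def norm_1_S_def
    by (simp add: sum_distrib_left)
qed

lemma lag_attain: "\<exists>Y\<in>PiE G (\<lambda>_. Bd). Lg u Y = F u"
proof -
  have "\<forall>r\<in>G. \<exists>z. z \<in> Bd \<and> inner (fst z) (ag r - u r) = af * norm (ag r - u r)
      \<and> trace (transpose (snd z) ** sym_grad M N d u r) = as * schatten (ereal p) (sym_grad M N d u r)"
  proof
    fix r assume r: "r \<in> G"
    obtain y where y: "norm y \<le> af" "inner y (ag r - u r) = af * norm (ag r - u r)" using vec_attain by blast
    obtain S where S: "S \<in> Bsym" "trace (transpose S ** sym_grad M N d u r) = as * schatten (ereal p) (sym_grad M N d u r)"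
      using mat_dual_attain[OF sym_grad_sym'[OF r]] by blast
    show "\<exists>z. z \<in> Bd \<and> inner (fst z) (ag r - u r) = af * norm (ag r - u r)
      \<and> trace (transpose (snd z) ** sym_grad M N d u r) = as * schatten (ereal p) (sym_grad M N d u r)"
      using y S by (intro exI[of _ "(y, S)"]) auto
  qed
  then obtain Z where Z0: "\<forall>r\<in>G. Z r \<in> Bd \<and> inner (fst (Z r)) (ag r - u r) = af * norm (ag r - u r)
      \<and> trace (transpose (snd (Z r)) ** sym_grad M N d u r) = as * schatten (ereal p) (sym_grad M N d u r)"
    by (rule bchoice[elim_format]) blast
  then have Z: "\<And>r. r \<in> G \<Longrightarrow> Z r \<in> Bd \<and> inner (fst (Z r)) (ag r - u r) = af * norm (ag r - u r)
      \<and> trace (transpose (snd (Z r)) ** sym_grad M N d u r) = as * schatten (ereal p) (sym_grad M N d u r)"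
    by blast
  define Y where "Y = restrict Z G"
  have "Y \<in> PiE G (\<lambda>_. Bd)" using Z by (auto simp: Y_def)
  moreover have "Lg u Y = F u"
  proof -
    have "vin M N (\<lambda>r. fst (Y r)) (\<lambda>r. ag r - u r) = (\<Sum>r\<in>G. af * norm (ag r - u r))"
      unfolding vin_def using Z by (intro sum.cong refl) (simp add: Y_def)
    moreover have "minner M N (\<lambda>r. snd (Y r)) (sym_grad M N d u) = (\<Sum>r\<in>G. as * schatten (ereal p) (sym_grad M N d u r))"
      unfolding minner_def using Z by (intro sum.cong refl) (simp add: Y_def)
    ultimately show ?thesis unfolding Lg_def GHS_primal_def norm_1_2_def norm_1_S_def sum_distrib_left by simp
  qed
  ultimately show ?thesis by blast
qed

lemma lag_rewrite: assumes "\<And>r. r \<in> G \<Longrightarrow> Y r \<in> Bd"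
  shows "Lg u Y = vin M N (\<lambda>r. fst (Y r)) ag
     + vin M N (\<lambda>r. mat_conv_flip M N (\<lambda>s. snd (Y s)) d r - fst (Y r)) u"
proof -
  have "minner M N (\<lambda>r. snd (Y r)) (sym_grad M N d u) = vin M N (mat_conv_flip M N (\<lambda>s. snd (Y s)) d) u"
    using assms by (intro minner_sym_grad) (auto simp: sym_iff mem_Times_iff)
  then show ?thesis unfolding Lg_def vin_diff_r vin_diff_l by simp
qed

lemma small_t: fixes A B :: real
  assumes h: "\<And>t. 0 < t \<Longrightarrow> t \<le> 1 \<Longrightarrow> 0 \<le> 2*t*A + t\<^sup>2*B" and B: "0 \<le> B" shows "0 \<le> A"
proof (rule ccontr)
  assume "\<not> 0 \<le> A"
  then have A: "A < 0" by simp
  define t where "t = min 1 (-A/(B+1))"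
  have t0: "0 < t" using A B by (simp add: t_def divide_neg_pos)
  have t1: "t \<le> 1" by (simp add: t_def)
  have "t \<le> -A/(B+1)" by (simp add: t_def)
  then have "t * (B + 1) \<le> -A/(B+1) * (B + 1)" using B by (intro mult_right_mono) auto
  then have "t * (B + 1) \<le> -A" using B by simp
  then have tB: "t * B < -A" using t0 by (simp add: algebra_simps)
  have "t\<^sup>2 * B = t * (t * B)" by (simp add: power2_eq_square)
  also have "\<dots> < t * (-A)" using tB t0 by (rule mult_strict_left_mono)
  finally have i1: "t\<^sup>2 * B < t * (-A)" .
  have i2: "t * A < 0" using t0 A by (simp add: mult_pos_neg)
  have e: "2*t*A + t\<^sup>2*B = t\<^sup>2*B + 2*(t*A)" "t * (-A) = -(t*A)" by simp_all
  show False using h[OF t0 t1] i1 i2 unfolding e by linarith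
qed

lemma vin_sq: "vin M N (\<lambda>r. a r + t *\<^sub>R b r) (\<lambda>r. a r + t *\<^sub>R b r) = vin M N a a + 2 * t * vin M N a b + t\<^sup>2 * vin M N b b"
  unfolding vin_def by (simp add: inner_add_left inner_add_right sum.distrib sum_distrib_left inner_commute[of "b _" "a _"]
     power2_eq_square algebra_simps)

lemma F_nonneg: "0 \<le> F u"
  unfolding GHS_primal_def norm_1_2_def norm_1_S_def using as af
  by (intro add_nonneg_nonneg mult_nonneg_nonneg sum_nonneg schatten_nonneg norm_ge_zero) auto

lemma F_ge_term: "r \<in> G \<Longrightarrow> af * norm (ag r - u r) \<le> F u"
proof -
  assume r: "r \<in> G"
  have "norm (ag r - u r) \<le> norm_1_2 M N (\<lambda>r. ag r - u r)"
    unfolding norm_1_2_def using r by (intro member_le_sum) auto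
  moreover have "0 \<le> as * norm_1_S M N (ereal p) (sym_grad M N d u)"
    unfolding norm_1_S_def using as by (intro mult_nonneg_nonneg sum_nonneg schatten_nonneg) auto
  ultimately show ?thesis unfolding GHS_primal_def using af by (smt (verit) mult_left_mono)
qed

lemma primal_min: "\<exists>u0. \<forall>u. F u0 \<le> F u"
proof -
  define R where "R = (\<Sum>r\<in>G. norm (ag r)) + F (\<lambda>_. 0) / af"
  define C where "C = PiE G (\<lambda>_. cball (0::real^2) R)"
  define z0 where "z0 = restrict (\<lambda>_. 0::real^2) G"
  have R: "0 \<le> R" unfolding R_def using F_nonneg af by (intro add_nonneg_nonneg sum_nonneg) auto
  have cC: "compact C" unfolding C_def by (intro compact_PiE_const compact_cball)
  have z0C: "z0 \<in> C" using R by (auto simp: C_def z0_def)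
  have Fz0: "F z0 = F (\<lambda>_. 0)" by (rule primal_cong) (simp add: z0_def)
  obtain u0 where u0: "u0 \<in> C" "\<And>y. y \<in> C \<Longrightarrow> F u0 \<le> F y"
    using continuous_attains_inf[OF cC _ cont_primal[OF expo_p]] z0C by blast
  have "F u0 \<le> F u" for u
  proof (cases "\<forall>r\<in>G. norm (u r) \<le> R")
    case True
    then have "restrict u G \<in> C" by (auto simp: C_def)
    moreover have "F (restrict u G) = F u" by (rule primal_cong) simp
    ultimately show ?thesis using u0 by metis
  next
    case False
    then obtain r where r: "r \<in> G" "R < norm (u r)" by (auto simp: not_le)
    have "norm (ag r) \<le> (\<Sum>r\<in>G. norm (ag r))" using r by (intro member_le_sum) auto
    then have "F (\<lambda>_. 0) / af < norm (ag r - u r)"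
      using r norm_triangle_ineq3[of "u r" "ag r"] unfolding R_def by (simp add: norm_minus_commute)
    then have "F (\<lambda>_. 0) < af * norm (ag r - u r)" using af by (simp add: divide_less_eq mult.commute)
    also have "\<dots> \<le> F u" by (rule F_ge_term[OF r(1)])
    finally show ?thesis using u0(2)[OF z0C] Fz0 by simp
  qed
  then show ?thesis by blast
qed

lemma feas_iff: "Nm \<in> GHS_feasible M N d q as af \<longleftrightarrow>
   (\<forall>r\<in>G. transpose (Nm r) = Nm r \<and> schatten q (Nm r) \<le> as \<and> norm (mat_conv_flip M N Nm d r) \<le> af)"
  unfolding GHS_feasible_def norm_inf_S_def norm_inf_2_def using G_ne
  by (auto simp: Max_le_iff)

lemma weak: assumes "Nm \<in> GHS_feasible M N d q as af" shows "minner M N Nm (hess_conv M N d g) \<le> F u"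
proof -
  define Y where "Y r = (mat_conv_flip M N Nm d r, Nm r)" for r
  have Y: "Y r \<in> Bd" if "r \<in> G" for r
    using assms that unfolding feas_iff by (auto simp: Y_def sym_iff)
  have "Lg u Y = vin M N (mat_conv_flip M N Nm d) ag + vin M N (\<lambda>r. mat_conv_flip M N Nm d r - mat_conv_flip M N Nm d r) u"
  proof -
    have "Lg u Y = vin M N (\<lambda>r. fst (Y r)) ag + vin M N (\<lambda>r. mat_conv_flip M N (\<lambda>s. snd (Y s)) d r - fst (Y r)) u"
      by (rule lag_rewrite) (rule Y)
    then show ?thesis by (simp add: Y_def[abs_def])
  qed
  also have "\<dots> = minner M N Nm (hess_conv M N d g)" by (simp add: minner_hess vin_def)
  moreover have "Lg u Y \<le> F u" by (rule lag_le) (rule Y)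
  ultimately show ?thesis by simp
qed

lemma cont_mcf: "continuous_on S (\<lambda>Nm. mat_conv_flip M N (Nm::mimg) d r)"
  unfolding mat_conv_flip_def
  by (intro continuous_on_vec_lambda continuous_on_sum cont_conv_l continuous_on_component cont_coord)

lemma cont_minner: "continuous_on S (\<lambda>Nm. minner M N Nm B)"
  unfolding minner_def trace_tm
  by (intro continuous_on_sum continuous_on_mult_right continuous_on_component cont_coord)

lemma dual_attain: "\<exists>Nm\<in>GHS_feasible M N d q as af. \<forall>Nm'\<in>GHS_feasible M N d q as af.
   minner M N Nm' (hess_conv M N d g) \<le> minner M N Nm (hess_conv M N d g)"
proof -
  define Kd where "Kd = PiE G (\<lambda>_. Bsym) \<inter> (\<Inter>r\<in>G. {Nm. norm (mat_conv_flip M N Nm d r) \<le> af})"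
  have cl: "closed {Nm. norm (mat_conv_flip M N Nm d r) \<le> af}" for r
    by (rule closed_Collect_le[OF continuous_on_norm[OF cont_mcf] continuous_on_const])
  have cK: "compact Kd" unfolding Kd_def
    by (rule compact_Int_closed[OF compact_PiE_const[OF Bsym_compact] closed_INT]) (use cl in blast)
  have z: "restrict (\<lambda>_. 0) G \<in> Kd"
  proof -
    have "mat_conv_flip M N (restrict (\<lambda>_. 0) G) d r = 0" for r by (rule mcf_zero) simp
    then show ?thesis unfolding Kd_def using zero_Bsym af by auto
  qed
  have ne: "Kd \<noteq> {}" using z by blast
  obtain Nm0 where Nm0: "Nm0 \<in> Kd" "\<forall>y\<in>Kd. minner M N y (hess_conv M N d g) \<le> minner M N Nm0 (hess_conv M N d g)"
    using continuous_attains_sup[OF cK ne cont_minner[of Kd "hess_conv M N d g"]] by blast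
  have KdF: "Nm \<in> GHS_feasible M N d q as af" if "Nm \<in> Kd" for Nm
    using that unfolding Kd_def feas_iff by (auto simp: sym_iff)
  show ?thesis
  proof (intro bexI[OF _ KdF[OF Nm0(1)]] ballI)
    fix Nm' assume Nm': "Nm' \<in> GHS_feasible M N d q as af"
    have "restrict Nm' G \<in> Kd"
    proof -
      have "mat_conv_flip M N (restrict Nm' G) d r = mat_conv_flip M N Nm' d r" for r
        by (rule mcf_cong) simp
      then show ?thesis using Nm' unfolding Kd_def feas_iff by (auto simp: sym_iff)
    qed
    moreover have "minner M N (restrict Nm' G) (hess_conv M N d g) = minner M N Nm' (hess_conv M N d g)"
      by (rule minner_cong) simp
    ultimately show "minner M N Nm' (hess_conv M N d g) \<le> minner M N Nm0 (hess_conv M N d g)"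
      using Nm0(2) by force
  qed
qed

lemma strong: assumes u0: "\<And>u. F u0 \<le> F u"
  shows "\<exists>Nm\<in>GHS_feasible M N d q as af. F u0 \<le> minner M N Nm (hess_conv M N d g)"
proof -
  define P where "P = F u0"
  have P0: "0 \<le> P" unfolding P_def by (rule F_nonneg)
  define wv where "wv Y r = mat_conv_flip M N (\<lambda>s. snd (Y s)) d r - fst (Y r)"
    for Y :: "nat \<times> nat \<Rightarrow> (real^2) \<times> (real^2^2)" and r
  define cv where "cv Y = vin M N (\<lambda>r. fst (Y r)) ag" for Y :: "nat \<times> nat \<Rightarrow> (real^2) \<times> (real^2^2)"
  define Qf where "Qf z = vin M N (wv (fst z)) (wv (fst z)) + (cv (fst z) - snd z - P)\<^sup>2"
    for z :: "(nat \<times> nat \<Rightarrow> (real^2) \<times> (real^2^2)) \<times> real"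
  define Z where "Z = PiE G (\<lambda>_. Bd) \<times> {0..1::real}"
  have cZ: "compact Z" unfolding Z_def
    by (intro compact_Times compact_PiE_const Bd_compact compact_Icc)
  have zZ: "(restrict (\<lambda>_. 0) G, 0) \<in> Z" unfolding Z_def using zero_Bd by auto
  have cfs: "continuous_on S (\<lambda>z::(nat \<times> nat \<Rightarrow> (real^2) \<times> (real^2^2)) \<times> real. fst z s)" for S s
    by (rule cont_coord'[OF continuous_on_fst[OF continuous_on_id]])
  have cw: "continuous_on S (\<lambda>z::(nat \<times> nat \<Rightarrow> (real^2) \<times> (real^2^2)) \<times> real. wv (fst z) r)" for S r
  proof -
    have c1: "continuous_on S (\<lambda>z::(nat \<times> nat \<Rightarrow> (real^2) \<times> (real^2^2)) \<times> real. \<lambda>s. snd (fst z s))"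
      by (rule continuous_on_coordinatewise_then_product, rule continuous_on_snd, rule cfs)
    show ?thesis unfolding wv_def
      by (rule continuous_on_diff[OF continuous_on_compose2[OF cont_mcf[of UNIV] c1] continuous_on_fst[OF cfs]]) auto
  qed
  have cQ: "continuous_on Z Qf" unfolding Qf_def cv_def vin_def
    by (intro continuous_on_add continuous_on_sum continuous_on_inner continuous_on_power continuous_on_diff
          continuous_on_const continuous_on_snd continuous_on_id cw continuous_on_fst[OF cfs])
  obtain z0 where z0: "z0 \<in> Z" "\<forall>z\<in>Z. Qf z0 \<le> Qf z"
    using continuous_attains_inf[OF cZ _ cQ] zZ by blast
  define Y0 where "Y0 = fst z0"
  define s0 where "s0 = snd z0"
  define w0 where "w0 = wv Y0"
  define c0 where "c0 = cv Y0"
  define e0 where "e0 = c0 - s0 - P"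
  define Q0 where "Q0 = vin M N w0 w0 + e0\<^sup>2"
  have Q0: "Q0 = Qf z0" unfolding Q0_def Qf_def w0_def e0_def c0_def Y0_def s0_def by simp
  have z0m: "fst z0 \<in> PiE G (\<lambda>_. Bd) \<and> snd z0 \<in> {0..1}" using z0(1) unfolding Z_def by (simp add: mem_Times_iff)
  have Y0: "Y0 \<in> PiE G (\<lambda>_. Bd)" "0 \<le> s0" "s0 \<le> 1" using z0m unfolding Y0_def s0_def by simp_all
  have VI: "0 \<le> vin M N w0 (\<lambda>r. wv Y r - w0 r) + e0 * ((cv Y - s) - (c0 - s0))"
    if Y: "Y \<in> PiE G (\<lambda>_. Bd)" and s: "0 \<le> s" "s \<le> 1" for Y s
  proof -
    define dw where "dw r = wv Y r - w0 r" for r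
    define de where "de = (cv Y - s) - (c0 - s0)"
    have key: "0 \<le> 2 * t * (vin M N w0 dw + e0 * de) + t\<^sup>2 * (vin M N dw dw + de\<^sup>2)"
      if t: "0 < t" "t \<le> 1" for t
    proof -
      define Yt where "Yt = (\<lambda>r. if r \<in> G then Y0 r + t *\<^sub>R (Y r - Y0 r) else undefined)"
      define st where "st = s0 + t * (s - s0)"
      have YtG: "Yt r = Y0 r + t *\<^sub>R (Y r - Y0 r)" if "r \<in> G" for r using that by (simp add: Yt_def)
      have YtZ: "Yt \<in> PiE G (\<lambda>_. Bd)"
      proof -
        have "Y0 r + t *\<^sub>R (Y r - Y0 r) \<in> Bd" if r: "r \<in> G" for r
        proof -
          have "(1 - t) *\<^sub>R Y0 r + t *\<^sub>R Y r \<in> Bd"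
            by (rule convexD[OF Bd_convex PiE_mem[OF Y0(1) r] PiE_mem[OF Y r]]) (use t in auto)
          then show ?thesis by (simp add: algebra_simps)
        qed
        then show ?thesis by (auto simp: Yt_def)
      qed
      have st_eq: "st = (1 - t) * s0 + t * s" by (simp add: st_def algebra_simps)
      have a1: "(1 - t) * s0 \<le> (1 - t) * 1" using t Y0 by (intro mult_left_mono) auto
      have a2: "t * s \<le> t * 1" using t s by (intro mult_left_mono) auto
      have a3: "0 \<le> (1 - t) * s0" "0 \<le> t * s" using t Y0 s by auto
      have st01: "0 \<le> st" "st \<le> 1" using st_eq a1 a2 a3 by simp_all
      have inZ: "(Yt, st) \<in> Z" unfolding Z_def using YtZ st01 by auto
      have wYt: "wv Yt r = w0 r + t *\<^sub>R dw r" if r: "r \<in> G" for r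
      proof -
        have "mat_conv_flip M N (\<lambda>s. snd (Yt s)) d r = mat_conv_flip M N (\<lambda>s. snd (Y0 s)) d r
            + t *\<^sub>R (mat_conv_flip M N (\<lambda>s. snd (Y s)) d r - mat_conv_flip M N (\<lambda>s. snd (Y0 s)) d r)"
          by (rule mcf_lin) (simp add: YtG)
        moreover have "fst (Yt r) = fst (Y0 r) + t *\<^sub>R (fst (Y r) - fst (Y0 r))" using YtG[OF r] by simp
        ultimately show ?thesis unfolding wv_def dw_def w0_def by (simp add: algebra_simps)
      qed
      have cYt: "cv Yt = c0 + t * (cv Y - c0)"
      proof -
        have "cv Yt = vin M N (\<lambda>r. fst (Y0 r) + t *\<^sub>R (fst (Y r) - fst (Y0 r))) ag"
          unfolding cv_def by (rule vin_cong) (simp_all add: YtG)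
        also have "\<dots> = c0 + t * (cv Y - c0)"
          unfolding vin_add_l vin_scale_l vin_diff_l c0_def cv_def by simp
        finally show ?thesis .
      qed
      have "Qf (Yt, st) = vin M N (\<lambda>r. w0 r + t *\<^sub>R dw r) (\<lambda>r. w0 r + t *\<^sub>R dw r) + (e0 + t * de)\<^sup>2"
      proof -
        have "vin M N (wv Yt) (wv Yt) = vin M N (\<lambda>r. w0 r + t *\<^sub>R dw r) (\<lambda>r. w0 r + t *\<^sub>R dw r)"
          by (rule vin_cong) (simp_all add: wYt)
        moreover have "cv Yt - st - P = e0 + t * de"
          unfolding cYt st_def e0_def de_def by (simp add: algebra_simps)
        ultimately show ?thesis unfolding Qf_def by simp
      qed
      also have "\<dots> = Q0 + (2 * t * (vin M N w0 dw + e0 * de) + t\<^sup>2 * (vin M N dw dw + de\<^sup>2))"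
        unfolding vin_sq Q0_def by (simp add: power2_eq_square algebra_simps)
      finally have "Qf (Yt, st) = Q0 + (2 * t * (vin M N w0 dw + e0 * de) + t\<^sup>2 * (vin M N dw dw + de\<^sup>2))" .
      moreover have "Q0 \<le> Qf (Yt, st)" using z0(2) inZ Q0 by auto
      ultimately show ?thesis by simp
    qed
    have "0 \<le> vin M N w0 dw + e0 * de"
      by (rule small_t[OF key]) (auto intro: add_nonneg_nonneg vin_nonneg)
    then show ?thesis unfolding dw_def de_def .
  qed
  have "Q0 = 0"
  proof (rule ccontr)
    assume "Q0 \<noteq> 0"
    moreover have "0 \<le> Q0" unfolding Q0_def using vin_nonneg[of M N w0] by simp
    ultimately have Qpos: "0 < Q0" by simp
    define Yz where "Yz = restrict (\<lambda>_. (0::(real^2) \<times> (real^2^2))) G"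
    have Yz: "Yz \<in> PiE G (\<lambda>_. Bd)" using zero_Bd by (auto simp: Yz_def)
    have wz: "wv Yz r = 0" if "r \<in> G" for r
    proof -
      have "mat_conv_flip M N (\<lambda>s. snd (Yz s)) d r = 0" by (rule mcf_zero) (simp add: Yz_def)
      then show ?thesis using that by (simp add: wv_def Yz_def)
    qed
    have cz: "cv Yz = 0"
    proof -
      have "cv Yz = vin M N (\<lambda>r. 0) ag" unfolding cv_def by (rule vin_cong) (simp_all add: Yz_def)
      then show ?thesis by (simp add: vin_def)
    qed
    have "0 \<le> vin M N w0 (\<lambda>r. wv Yz r - w0 r) + e0 * ((cv Yz - 1) - (c0 - s0))"
      by (rule VI[OF Yz]) simp_all
    also have "vin M N w0 (\<lambda>r. wv Yz r - w0 r) = - vin M N w0 w0"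
    proof -
      have "vin M N w0 (\<lambda>r. wv Yz r - w0 r) = vin M N w0 (\<lambda>r. - w0 r)" by (rule vin_cong) (simp_all add: wz)
      then show ?thesis by (simp add: vin_def sum_negf)
    qed
    finally have "0 \<le> - vin M N w0 w0 + e0 * (- 1 - (c0 - s0))" unfolding cz by simp
    moreover have "c0 - s0 = e0 + P" unfolding e0_def by simp
    ultimately have "0 \<le> - vin M N w0 w0 - e0 - e0 * e0 - e0 * P" by (simp add: algebra_simps)
    then have "e0 * (1 + P) \<le> - Q0" unfolding Q0_def by (simp add: power2_eq_square algebra_simps)
    then have "e0 * (1 + P) < 0" using Qpos by simp
    then have e0neg: "e0 < 0" using P0 by (simp add: mult_less_0_iff)
    define u where "u r = (1 / e0) *\<^sub>R w0 r" for r
    obtain Y where Y: "Y \<in> PiE G (\<lambda>_. Bd)" "Lg u Y = F u" using lag_attain by blast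
    have YG: "\<And>r. r \<in> G \<Longrightarrow> Y r \<in> Bd" using Y(1) by auto
    have "Lg u Y = cv Y + vin M N (wv Y) u"
      unfolding cv_def wv_def by (rule lag_rewrite) (rule YG)
    also have "vin M N (wv Y) u = (1 / e0) * vin M N w0 (wv Y)"
      unfolding u_def vin_scale_r by (simp add: vin_comm)
    finally have L: "Lg u Y = cv Y + (1 / e0) * vin M N w0 (wv Y)" .
    have "0 \<le> vin M N w0 (\<lambda>r. wv Y r - w0 r) + e0 * ((cv Y - 0) - (c0 - s0))"
      by (rule VI[OF Y(1)]) simp_all
    then have "0 \<le> vin M N w0 (wv Y) - vin M N w0 w0 + e0 * cv Y - e0 * (e0 + P)"
      unfolding vin_diff_r e0_def by (simp add: algebra_simps)
    then have "Q0 + e0 * P \<le> vin M N w0 (wv Y) + e0 * cv Y"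
      unfolding Q0_def by (simp add: power2_eq_square algebra_simps)
    then have "(Q0 + e0 * P) / e0 \<ge> (vin M N w0 (wv Y) + e0 * cv Y) / e0"
      using e0neg by (simp add: divide_right_mono_neg)
    then have "Q0 / e0 + P \<ge> (1 / e0) * vin M N w0 (wv Y) + cv Y"
      using e0neg by (simp add: add_divide_distrib)
    moreover have "Q0 / e0 < 0" using Qpos e0neg by (simp add: divide_pos_neg)
    ultimately have "Lg u Y < P" unfolding L by simp
    moreover have "P \<le> F u" unfolding P_def by (rule u0)
    ultimately show False using Y(2) by simp
  qed
  moreover have "0 \<le> vin M N w0 w0" "0 \<le> e0\<^sup>2" using vin_nonneg[of M N w0] by simp_all
  ultimately have w00: "vin M N w0 w0 = 0" and "e0\<^sup>2 = 0" unfolding Q0_def by linarith+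
  then have e00: "e0 = 0" by simp
  define Nm0 where "Nm0 s = snd (Y0 s)" for s
  have T0: "mat_conv_flip M N Nm0 d r = fst (Y0 r)" if r: "r \<in> G" for r
    using vin_zero[OF w00 r] unfolding w0_def wv_def Nm0_def[abs_def] by simp
  have feas: "Nm0 \<in> GHS_feasible M N d q as af"
    unfolding feas_iff
  proof
    fix r assume r: "r \<in> G"
    have "Y0 r \<in> Bd" by (rule PiE_mem[OF Y0(1) r])
    then show "transpose (Nm0 r) = Nm0 r \<and> schatten q (Nm0 r) \<le> as \<and> norm (mat_conv_flip M N Nm0 d r) \<le> af"
      unfolding T0[OF r] by (simp add: Nm0_def sym_iff mem_Times_iff)
  qed
  have "minner M N Nm0 (hess_conv M N d g) = vin M N (mat_conv_flip M N Nm0 d) ag" by (rule minner_hess)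
  also have "\<dots> = c0" unfolding c0_def cv_def by (rule vin_cong) (simp_all add: T0)
  also have "\<dots> = s0 + P" using e00 unfolding e0_def by simp
  finally have "P \<le> minner M N Nm0 (hess_conv M N d g)" using Y0(2) by simp
  then show ?thesis using feas unfolding P_def by blast
qed

end

lemma conjp_from: assumes "1 \<le> p" "1 < q" "1 / ereal p + 1 / q = 1" shows "conjp (ereal p) q"
proof (cases q)
  case PInf
  then have "1 / ereal p = 1" using assms(3) by simp
  then have "p = 1" using assms(1) by (simp add: one_ereal_def)
  then show ?thesis using PInf unfolding conjp_def by (simp add: one_ereal_def)
next
  case (real q')
  then have q': "1 < q'" using assms(2) by simp
  have h1: "1 / ereal p = ereal (1/p)" "1 / ereal q' = ereal (1/q')" using assms(1) q'
    by (simp_all add: one_ereal_def)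
  have "ereal (1/p + 1/q') = 1" using assms(3) unfolding real h1 by simp
  then have e: "1/p + 1/q' = 1" by (simp add: one_ereal_def)
  moreover have "0 < 1/q'" using q' by simp
  ultimately have "1/p < 1" by linarith
  then have "1 < p" using assms(1) by (simp add: divide_less_eq)
  then show ?thesis using e q' real unfolding conjp_def by auto
next
  case MInf then show ?thesis using assms(2) by simp
qed

theorem proposition1:
  fixes M N :: nat and p :: real and q :: ereal and as af :: real
    and g :: img and d :: "2 \<Rightarrow> img"
  assumes "0 < M" and "0 < N"
    and "1 \<le> p" and "1 < q" and "1 / ereal p + 1 / q = 1"
    and "0 < as" and "0 < af"
  shows "(\<exists>Nm\<in>GHS_feasible M N d q as af. minner M N Nm (hess_conv M N d g) = GHS M N d q g as af)
       \<and> (\<forall>Nm\<in>GHS_feasible M N d q as af. minner M N Nm (hess_conv M N d g) \<le> GHS M N d q g as af)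
       \<and> (\<exists>u. GHS_primal M N d p g as af u = GHS M N d q g as af)
       \<and> (\<forall>u. GHS M N d q g as af \<le> GHS_primal M N d p g as af u)"
proof -
  have c: "conjp (ereal p) q" by (rule conjp_from[OF assms(3,4,5)])
  note ctx = assms(1,2) c assms(6,7)
  obtain u0 where u0: "\<And>u. GHS_primal M N d p g as af u0 \<le> GHS_primal M N d p g as af u"
    using primal_min[OF ctx, of d g] by blast
  obtain Ns where Ns: "Ns \<in> GHS_feasible M N d q as af"
    "\<And>Nm'. Nm' \<in> GHS_feasible M N d q as af \<Longrightarrow> minner M N Nm' (hess_conv M N d g) \<le> minner M N Ns (hess_conv M N d g)"
    using dual_attain[OF ctx, of d g] by blast
  have G: "GHS M N d q g as af = minner M N Ns (hess_conv M N d g)"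
    unfolding GHS_def by (rule cSup_eq_maximum) (use Ns in auto)
  have W: "minner M N Ns (hess_conv M N d g) \<le> GHS_primal M N d p g as af u" for u
    by (rule weak[OF ctx Ns(1)])
  obtain Nm where Nm: "Nm \<in> GHS_feasible M N d q as af"
    "GHS_primal M N d p g as af u0 \<le> minner M N Nm (hess_conv M N d g)"
    using strong[OF ctx u0] by blast
  have "GHS_primal M N d p g as af u0 = GHS M N d q g as af"
    using Nm Ns(2)[OF Nm(1)] W[of u0] unfolding G by linarith
  then show ?thesis using Ns W unfolding G by blast
qed

end
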